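(* For every real $\beta$ and all $t\in\mathbb{R}$: $L=M(t)+V(t)=R(t)+S(t)+V(t)$; the operators $M(t),L,V(t),R(t),S(t)$ are self-adjoint and pairwise commute; $M(t)$ and $V(t)$ have only nonnegative eigenvalues. Moreover, for $t>0$ the operators $b(t),M(t),L,V(t)$ all have the same kernel.
   Context: Let $G$ be a finite simple graph. For $k\ge0$ let $\Omega_k$ be the space of complex-valued functions on the (oriented) $k$-simplices of $G$ (complete subgraphs with $k+1$ vertices), $\Omega=\bigoplus_k\Omega_k$. The exterior derivative $d_0:\Omega_k\to\Omega_{k+1}$ is $(d_0f)(x_0,\dots,x_{k+1})=\sum_{j}(-1)^jf(x_0,\dots,\hat x_j,\dots,x_{k+1})$, $D_0=d_0+d_0^*$, $L=D_0^2$. For a self-adjoint operator $D$ on $\Omega$ whose blocks $\Omega_k\to\Omega_j$ vanish unless $|j-k|\le1$, write $D=d+d^*+b$ with $d$ the blocks $\Omega_k\to\Omega_{k+1}$ and $b$ the block-diagonal part. The Dirac deformation with real parameter $\beta$ is the solution $D(t)$ of $D'=BD-DB$, $D(0)=D_0$, with $B(t)=d(t)-d(t)^*+i\beta b(t)$, $D(t)=d(t)+d(t)^*+b(t)$ (the solution exists for all real $t$ and keeps this form). Set $C(t)=d(t)+d(t)^*$, $M(t)=C(t)^2$, $V(t)=b(t)^2$, $R(t)=d(t)d(t)^*$, $S(t)=d(t)^*d(t)$. *)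

theory Defs
  imports "HOL-Analysis.Analysis"
begin

text \<open>Vertices carry a linear order, used to fix the orientation of each simplex
(an oriented simplex is identified with its increasingly ordered vertex list).\<close>

definition finite_simple_graph :: "'a set \<Rightarrow> ('a \<Rightarrow> 'a \<Rightarrow> bool) \<Rightarrow> bool" where
  "finite_simple_graph V E \<longleftrightarrow> finite V \<and> (\<forall>u v. E u v \<longrightarrow> u \<in> V \<and> v \<in> V)
     \<and> (\<forall>u v. E u v \<longrightarrow> E v u) \<and> (\<forall>u. \<not> E u u)"

text \<open>Simplices = complete subgraphs (nonempty vertex sets, pairwise adjacent).
A k-simplex has card k+1.\<close>
definition simplices :: "'a set \<Rightarrow> ('a \<Rightarrow> 'a \<Rightarrow> bool) \<Rightarrow> 'a set set" where
  "simplices V E = {x. x \<subseteq> V \<and> x \<noteq> {} \<and> (\<forall>u\<in>x. \<forall>v\<in>x. u \<noteq> v \<longrightarrow> E u v)}"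

text \<open>Operators on \<Omega> are matrices indexed by simplices; vectors are functions on
simplices vanishing outside S.\<close>
type_synonym 'a op = "'a set \<Rightarrow> 'a set \<Rightarrow> complex"

definition vecs :: "'a set set \<Rightarrow> ('a set \<Rightarrow> complex) set" where
  "vecs S = {f. \<forall>x. x \<notin> S \<longrightarrow> f x = 0}"

definition mmul :: "'a set set \<Rightarrow> 'a op \<Rightarrow> 'a op \<Rightarrow> 'a op" where
  "mmul S A B = (\<lambda>x y. if x \<in> S \<and> y \<in> S then (\<Sum>z\<in>S. A x z * B z y) else 0)"

definition mvec :: "'a set set \<Rightarrow> 'a op \<Rightarrow> ('a set \<Rightarrow> complex) \<Rightarrow> ('a set \<Rightarrow> complex)" where
  "mvec S A f = (\<lambda>x. if x \<in> S then (\<Sum>y\<in>S. A x y * f y) else 0)"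

definition adj :: "'a op \<Rightarrow> 'a op" where
  "adj A = (\<lambda>x y. cnj (A y x))"

definition madd :: "'a op \<Rightarrow> 'a op \<Rightarrow> 'a op" where
  "madd A B = (\<lambda>x y. A x y + B x y)"

definition msub :: "'a op \<Rightarrow> 'a op \<Rightarrow> 'a op" where
  "msub A B = (\<lambda>x y. A x y - B x y)"

definition mscale :: "complex \<Rightarrow> 'a op \<Rightarrow> 'a op" where
  "mscale c A = (\<lambda>x y. c * A x y)"

text \<open>Exterior derivative d_0 : entry (x,y) with x a (k+1)-simplex and y a k-simplex,
y = x with its j-th vertex (in increasing order) removed, equals (-1)^j.\<close>
definition ext_d :: "'a::linorder set set \<Rightarrow> 'a op" where
  "ext_d S = (\<lambda>x y. if x \<in> S \<and> y \<in> S \<and> y \<subseteq> x \<and> card x = card y + 1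
       then (\<Sum>w\<in>x - y. (-1) ^ card {v\<in>x. v < w}) else 0)"

definition dirac0 :: "'a::linorder set set \<Rightarrow> 'a op" where
  "dirac0 S = madd (ext_d S) (adj (ext_d S))"

definition dpart :: "'a op \<Rightarrow> 'a op" where
  "dpart A = (\<lambda>x y. if card x = card y + 1 then A x y else 0)"

definition bpart :: "'a op \<Rightarrow> 'a op" where
  "bpart A = (\<lambda>x y. if card x = card y then A x y else 0)"

definition self_adjoint :: "'a op \<Rightarrow> bool" where
  "self_adjoint A \<longleftrightarrow> adj A = A"

definition eigenvalue :: "'a set set \<Rightarrow> 'a op \<Rightarrow> complex \<Rightarrow> bool" where
  "eigenvalue S A c \<longleftrightarrow> (\<exists>f\<in>vecs S. f \<noteq> (\<lambda>_. 0) \<and> mvec S A f = (\<lambda>x. c * f x))"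

definition kernel :: "'a set set \<Rightarrow> 'a op \<Rightarrow> ('a set \<Rightarrow> complex) set" where
  "kernel S A = {f\<in>vecs S. mvec S A f = (\<lambda>_. 0)}"

definition laxB :: "real \<Rightarrow> 'a op \<Rightarrow> 'a op" where
  "laxB \<beta> D = madd (msub (dpart D) (adj (dpart D))) (mscale (\<i> * complex_of_real \<beta>) (bpart D))"

definition dirac_deformation :: "'a::linorder set set \<Rightarrow> real \<Rightarrow> (real \<Rightarrow> 'a op) \<Rightarrow> bool" where
  "dirac_deformation S \<beta> D \<longleftrightarrow> D 0 = dirac0 S \<and>
     (\<forall>t x y. ((\<lambda>s. D s x y) has_vector_derivative
        (msub (mmul S (laxB \<beta> (D t)) (D t)) (mmul S (D t) (laxB \<beta> (D t)))) x y) (at t))"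

end

theory Submission
  imports Defs
begin


lemma gronwall_fin:
  fixes E E' :: "real \<Rightarrow> 'i \<Rightarrow> complex"
  assumes fin: "finite I"
    and der: "\<And>s i. i \<in> I \<Longrightarrow> ((\<lambda>s. E s i) has_vector_derivative E' s i) (at s)"
    and bnd: "\<And>s i. s \<in> {a..b} \<Longrightarrow> i \<in> I \<Longrightarrow> cmod (E' s i) \<le> K * (\<Sum>j\<in>I. cmod (E s j))"
    and K: "0 \<le> K"
    and t0: "t0 \<in> {a..b}" and z: "\<And>i. i \<in> I \<Longrightarrow> E t0 i = 0"
    and s: "s \<in> {a..b}" and i: "i \<in> I"
  shows "E s i = 0"
proof -
  define n where "n = (\<lambda>s. \<Sum>i\<in>I. (Re (E s i))\<^sup>2 + (Im (E s i))\<^sup>2)"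
  define n' where "n' = (\<lambda>s. \<Sum>i\<in>I. 2 * (Re (E s i) * Re (E' s i) + Im (E s i) * Im (E' s i)))"
  define K2 where "K2 = 2 * K * real (card I)"
  have K2: "0 \<le> K2" using K by (simp add: K2_def)
  have nder: "(n has_real_derivative n' s) (at s)" for s
  proof -
    have "\<And>i. i \<in> I \<Longrightarrow> ((\<lambda>s. Re (E s i)) has_real_derivative Re (E' s i)) (at s)
        \<and> ((\<lambda>s. Im (E s i)) has_real_derivative Im (E' s i)) (at s)"
      using der by (simp add: has_vector_derivative_complex_iff)
    then have "\<And>i. i \<in> I \<Longrightarrow> ((\<lambda>s. (Re (E s i))\<^sup>2 + (Im (E s i))\<^sup>2) has_real_derivative
          2 * (Re (E s i) * Re (E' s i) + Im (E s i) * Im (E' s i))) (at s)"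
    proof -
      fix i assume "i \<in> I"
      then have a: "((\<lambda>s. Re (E s i)) has_real_derivative Re (E' s i)) (at s)"
        and b: "((\<lambda>s. Im (E s i)) has_real_derivative Im (E' s i)) (at s)"
        using der by (auto simp: has_vector_derivative_complex_iff)
      show "((\<lambda>s. (Re (E s i))\<^sup>2 + (Im (E s i))\<^sup>2) has_real_derivative
          2 * (Re (E s i) * Re (E' s i) + Im (E s i) * Im (E' s i))) (at s)"
        unfolding power2_eq_square
        using DERIV_add[OF DERIV_mult[OF a a] DERIV_mult[OF b b]] by (simp add: algebra_simps)
    qed
    then show ?thesis unfolding n_def n'_def
      by (rule DERIV_sum)
  qed
  have nnn: "0 \<le> n s" for s unfolding n_def by (auto intro!: sum_nonneg)
  have ncm: "n s = (\<Sum>i\<in>I. (cmod (E s i))\<^sup>2)" for s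
    unfolding n_def by (simp add: cmod_power2)
  have nbound: "\<bar>n' s\<bar> \<le> K2 * n s" if "s \<in> {a..b}" for s
  proof -
    have "\<bar>n' s\<bar> \<le> (\<Sum>i\<in>I. 2 * (cmod (E s i) * cmod (E' s i)))"
      unfolding n'_def
    proof (rule order_trans[OF sum_abs], rule sum_mono)
      fix i assume "i \<in> I"
      have "Re (E s i) * Re (E' s i) + Im (E s i) * Im (E' s i) = Re (cnj (E s i) * E' s i)" by simp
      also have "\<bar>\<dots>\<bar> \<le> cmod (cnj (E s i) * E' s i)" by (rule abs_Re_le_cmod)
      also have "\<dots> = cmod (E s i) * cmod (E' s i)" by (simp add: norm_mult)
      finally show "\<bar>2 * (Re (E s i) * Re (E' s i) + Im (E s i) * Im (E' s i))\<bar> \<le> 2 * (cmod (E s i) * cmod (E' s i))"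
        by (simp add: abs_mult)
    qed
    also have "\<dots> \<le> (\<Sum>i\<in>I. 2 * (cmod (E s i) * (K * (\<Sum>j\<in>I. cmod (E s j)))))"
      using bnd[OF that] by (intro sum_mono mult_left_mono) auto
    also have "\<dots> = 2 * K * (\<Sum>j\<in>I. cmod (E s j))\<^sup>2"
      by (simp add: sum_distrib_left sum_distrib_right power2_eq_square algebra_simps)
    also have "\<dots> \<le> 2 * K * ((\<Sum>j\<in>I. (cmod (E s j))\<^sup>2) * real (card I))"
      using K by (intro mult_left_mono sum_squared_le_sum_of_squares) auto
    also have "\<dots> = K2 * n s" by (simp add: ncm K2_def)
    finally show ?thesis .
  qed
  have "n s = 0"
  proof (cases "t0 \<le> s")
    case True
    define h where "h = (\<lambda>s. n s * exp (- K2 * s))"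
    have "h s \<le> h t0"
    proof (rule DERIV_nonpos_imp_nonincreasing[OF True])
      fix x assume x: "t0 \<le> x" "x \<le> s"
      then have xab: "x \<in> {a..b}" using t0 s by auto
      have "(h has_real_derivative (n' x * exp (- K2 * x) + n x * (exp (- K2 * x) * (- K2)))) (at x)"
        unfolding h_def by (auto intro!: derivative_eq_intros nder)
      moreover have "n' x * exp (- K2 * x) + n x * (exp (- K2 * x) * (- K2)) \<le> 0"
      proof -
        have "n' x \<le> K2 * n x" using nbound[OF xab] by linarith
        then have "n' x * exp (- K2 * x) \<le> K2 * n x * exp (- K2 * x)" by (intro mult_right_mono) auto
        then show ?thesis by (simp add: algebra_simps)
      qed
      ultimately show "\<exists>y. (h has_real_derivative y) (at x) \<and> y \<le> 0" by blast
    qed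
    moreover have "n t0 = 0" unfolding n_def using z by simp
    ultimately have "n s * exp (- K2 * s) \<le> 0" by (simp add: h_def)
    then have "n s \<le> 0" by (simp add: mult_le_0_iff)
    then show ?thesis using nnn[of s] by linarith
  next
    case False
    then have le: "s \<le> t0" by simp
    define h where "h = (\<lambda>s. n s * exp (K2 * s))"
    have "h s \<le> h t0"
    proof (rule DERIV_nonneg_imp_nondecreasing[OF le])
      fix x assume x: "s \<le> x" "x \<le> t0"
      then have xab: "x \<in> {a..b}" using t0 s by auto
      have "(h has_real_derivative (n' x * exp (K2 * x) + n x * (exp (K2 * x) * K2))) (at x)"
        unfolding h_def by (auto intro!: derivative_eq_intros nder)
      moreover have "0 \<le> n' x * exp (K2 * x) + n x * (exp (K2 * x) * K2)"
      proof -
        have "- K2 * n x \<le> n' x" using nbound[OF xab] by linarith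
        then have "- K2 * n x * exp (K2 * x) \<le> n' x * exp (K2 * x)" by (intro mult_right_mono) auto
        then show ?thesis by (simp add: algebra_simps)
      qed
      ultimately show "\<exists>y. (h has_real_derivative y) (at x) \<and> 0 \<le> y" by blast
    qed
    moreover have "n t0 = 0" unfolding n_def using z by simp
    ultimately have "n s * exp (K2 * s) \<le> 0" by (simp add: h_def)
    then have "n s \<le> 0" by (simp add: mult_le_0_iff)
    then show ?thesis using nnn[of s] by linarith
  qed
  then have "(\<Sum>i\<in>I. (cmod (E s i))\<^sup>2) = 0" by (simp add: ncm)
  then have "(cmod (E s i))\<^sup>2 = 0" using sum_nonneg_eq_0_iff[OF fin, of "\<lambda>i. (cmod (E s i))\<^sup>2"] i by auto
  then show ?thesis by simp
qed


definition Z :: "'a op" where "Z = (\<lambda>x y. 0)"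

lemma mmul_madd_left: "mmul S (madd A B) C = madd (mmul S A C) (mmul S B C)"
  by (auto simp: mmul_def madd_def fun_eq_iff sum.distrib algebra_simps)
lemma mmul_madd_right: "mmul S C (madd A B) = madd (mmul S C A) (mmul S C B)"
  by (auto simp: mmul_def madd_def fun_eq_iff sum.distrib algebra_simps)
lemma mmul_msub_left: "mmul S (msub A B) C = msub (mmul S A C) (mmul S B C)"
  by (auto simp: mmul_def msub_def fun_eq_iff sum_subtractf algebra_simps)
lemma mmul_msub_right: "mmul S C (msub A B) = msub (mmul S C A) (mmul S C B)"
  by (auto simp: mmul_def msub_def fun_eq_iff sum_subtractf algebra_simps)
lemma mmul_mscale_left: "mmul S (mscale c A) B = mscale c (mmul S A B)"
  by (auto simp: mmul_def mscale_def fun_eq_iff sum_distrib_left algebra_simps)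
lemma mmul_mscale_right: "mmul S B (mscale c A) = mscale c (mmul S B A)"
  by (auto simp: mmul_def mscale_def fun_eq_iff sum_distrib_left algebra_simps)
lemma mmul_Z_left[simp]: "mmul S Z A = Z" by (auto simp: mmul_def Z_def fun_eq_iff)
lemma mmul_Z_right[simp]: "mmul S A Z = Z" by (auto simp: mmul_def Z_def fun_eq_iff)
lemma mmul_assoc: "finite S \<Longrightarrow> mmul S (mmul S A B) C = mmul S A (mmul S B C)"
  by (auto simp: mmul_def fun_eq_iff sum_distrib_left sum_distrib_right algebra_simps
      intro: sum.swap)
lemma adj_mmul: "adj (mmul S A B) = mmul S (adj B) (adj A)"
  by (auto simp: mmul_def adj_def fun_eq_iff algebra_simps)
lemma adj_madd: "adj (madd A B) = madd (adj A) (adj B)" by (auto simp: adj_def madd_def fun_eq_iff)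
lemma adj_msub: "adj (msub A B) = msub (adj A) (adj B)" by (auto simp: adj_def msub_def fun_eq_iff)
lemma adj_mscale: "adj (mscale c A) = mscale (cnj c) (adj A)" by (auto simp: adj_def mscale_def fun_eq_iff)
lemma adj_adj[simp]: "adj (adj A) = A" by (auto simp: adj_def fun_eq_iff)
lemma adj_Z[simp]: "adj Z = Z" by (auto simp: adj_def Z_def fun_eq_iff)

lemma mvec_mmul: "mvec S (mmul S A B) f = mvec S A (mvec S B f)"
  by (auto simp: mvec_def mmul_def fun_eq_iff sum_distrib_left sum_distrib_right algebra_simps
      intro: sum.swap)


definition band :: "'a op \<Rightarrow> bool" where
  "band A \<longleftrightarrow> (\<forall>x y. \<not> (card x = card y + 1 \<or> card y = card x + 1 \<or> card x = card y) \<longrightarrow> A x y = 0)"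

definition good :: "'a set set \<Rightarrow> 'a op \<Rightarrow> bool" where
  "good S A \<longleftrightarrow> (\<forall>x y. x \<notin> S \<or> y \<notin> S \<longrightarrow> A x y = 0) \<and> adj A = A \<and> band A"

definition FF :: "'a set set \<Rightarrow> real \<Rightarrow> 'a op \<Rightarrow> 'a op" where
  "FF S \<beta> A = msub (mmul S (laxB \<beta> A) A) (mmul S A (laxB \<beta> A))"

lemma good_out: "good S A \<Longrightarrow> x \<notin> S \<or> y \<notin> S \<Longrightarrow> A x y = 0" by (simp add: good_def)
lemma good_herm: "good S A \<Longrightarrow> A y x = cnj (A x y)"
  unfolding good_def by (metis adj_def complex_cnj_cnj)
lemma good_band: "good S A \<Longrightarrow> card x \<noteq> card y + 1 \<Longrightarrow> card y \<noteq> card x + 1 \<Longrightarrow> card x \<noteq> card y \<Longrightarrow> A x y = 0"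
  by (simp add: good_def band_def)

lemma laxB_entry: "laxB \<beta> A x z = (if card x = card z + 1 then A x z else 0)
   - cnj (if card z = card x + 1 then A z x else 0) + \<i> * of_real \<beta> * (if card x = card z then A x z else 0)"
  by (simp add: laxB_def madd_def msub_def mscale_def dpart_def bpart_def adj_def)

lemma FF_entry: "FF S \<beta> A x y = (if x \<in> S \<and> y \<in> S then (\<Sum>z\<in>S. laxB \<beta> A x z * A z y - A x z * laxB \<beta> A z y) else 0)"
  by (simp add: FF_def msub_def mmul_def sum_subtractf)

lemma term_d:
  assumes g: "good S A" and c: "card x = card y + 1"
  shows "laxB \<beta> A x z * A z y - A x z * laxB \<beta> A z y =
       (1 - \<i> * of_real \<beta>) * (dpart A x z * bpart A z y - bpart A x z * dpart A z y)"
proof -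
  consider "card z = card y" | "card z = card y + 1" | "card z = card y + 2"
    | "card z \<noteq> card y" "card z \<noteq> card y + 1" "card z \<noteq> card y + 2" by linarith
  then show ?thesis
  proof cases
    case 1 then show ?thesis using c by (simp add: laxB_entry dpart_def bpart_def algebra_simps)
  next
    case 2 then show ?thesis using c by (simp add: laxB_entry dpart_def bpart_def algebra_simps)
  next
    case 3 then show ?thesis using c good_band[OF g, of z y] by (simp add: laxB_entry dpart_def bpart_def)
  next
    case 4 then show ?thesis using c good_band[OF g, of z y] good_band[OF g, of x z]
      by (simp add: laxB_entry dpart_def bpart_def)
  qed
qed

lemma term_b:
  assumes g: "good S A" and c: "card x = card y"
  shows "laxB \<beta> A x z * A z y - A x z * laxB \<beta> A z y =
       2 * (dpart A x z * adj (dpart A) z y - adj (dpart A) x z * dpart A z y)"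
proof -
  consider "card y = card z + 1" | "card z = card y" | "card z = card y + 1"
    | "card y \<noteq> card z + 1" "card z \<noteq> card y" "card z \<noteq> card y + 1" by linarith
  then show ?thesis
  proof cases
    case 1 then show ?thesis using c good_herm[OF g, of z y] good_herm[OF g, of z x]
      by (simp add: laxB_entry dpart_def adj_def algebra_simps)
  next
    case 2 then show ?thesis using c by (simp add: laxB_entry dpart_def adj_def algebra_simps)
  next
    case 3 then show ?thesis using c good_herm[OF g, of x z] good_herm[OF g, of y z]
      by (simp add: laxB_entry dpart_def adj_def algebra_simps)
  next
    case 4 then show ?thesis using c good_band[OF g, of z y] good_band[OF g, of x z]
      by (simp add: laxB_entry dpart_def adj_def)
  qed
qed

lemma term_band:
  assumes g: "good S A" and c: "card x \<noteq> card y + 1" "card y \<noteq> card x + 1" "card x \<noteq> card y"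
  shows "laxB \<beta> A x z * A z y - A x z * laxB \<beta> A z y = 0"
proof -
  consider "card x = card z + 1" | "card z = card x" | "card z = card x + 1"
    | "card x \<noteq> card z + 1" "card z \<noteq> card x" "card z \<noteq> card x + 1" by linarith
  then show ?thesis
  proof cases
    case 1 then show ?thesis using c good_band[OF g, of z y] good_herm[OF g, of y z]
      by (cases "card z = card y + 1") (auto simp: laxB_entry)
  next
    case 2 then show ?thesis using c good_band[OF g, of z y] by (simp add: laxB_entry)
  next
    case 3 then show ?thesis using c good_band[OF g, of z y] good_herm[OF g, of x z] good_herm[OF g, of y z]
      by (cases "card y = card z + 1") (auto simp: laxB_entry)
  next
    case 4 then show ?thesis using c good_band[OF g, of x z]
      by (simp add: laxB_entry)
  qed
qed

lemma laxB_skew: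
  assumes g: "good S A"
  shows "cnj (laxB \<beta> A y z) = - laxB \<beta> A z y"
  using good_herm[OF g, of y z] good_herm[OF g, of z y]
  by (auto simp: laxB_entry)

lemma FF_dpart:
  assumes g: "good S A"
  shows "dpart (FF S \<beta> A) = mscale (1 - \<i> * of_real \<beta>) (msub (mmul S (dpart A) (bpart A)) (mmul S (bpart A) (dpart A)))"
proof (intro ext)
  fix x y
  show "dpart (FF S \<beta> A) x y = mscale (1 - \<i> * of_real \<beta>) (msub (mmul S (dpart A) (bpart A)) (mmul S (bpart A) (dpart A))) x y"
  proof (cases "card x = card y + 1")
    case False
    have a: "(\<Sum>z\<in>S. dpart A x z * bpart A z y) = 0" "(\<Sum>z\<in>S. bpart A x z * dpart A z y) = 0"
      using False by (auto simp: dpart_def bpart_def intro!: sum.neutral)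
    have "dpart (FF S \<beta> A) x y = 0" using False by (simp add: dpart_def)
    then show ?thesis using a by (simp add: mscale_def msub_def mmul_def)
  next
    case True
    have "dpart (FF S \<beta> A) x y = FF S \<beta> A x y" using True by (simp add: dpart_def)
    also have "\<dots> = (if x \<in> S \<and> y \<in> S then (\<Sum>z\<in>S. (1 - \<i> * of_real \<beta>) * (dpart A x z * bpart A z y - bpart A x z * dpart A z y)) else 0)"
      by (simp add: FF_entry term_d[OF g True])
    also have "\<dots> = mscale (1 - \<i> * of_real \<beta>) (msub (mmul S (dpart A) (bpart A)) (mmul S (bpart A) (dpart A))) x y"
      by (simp add: mscale_def msub_def mmul_def sum_subtractf flip: sum_distrib_left)
    finally show ?thesis .
  qed
qed

lemma FF_bpart:
  assumes g: "good S A"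
  shows "bpart (FF S \<beta> A) = mscale 2 (msub (mmul S (dpart A) (adj (dpart A))) (mmul S (adj (dpart A)) (dpart A)))"
proof (intro ext)
  fix x y
  show "bpart (FF S \<beta> A) x y = mscale 2 (msub (mmul S (dpart A) (adj (dpart A))) (mmul S (adj (dpart A)) (dpart A))) x y"
  proof (cases "card x = card y")
    case False
    have a: "(\<Sum>z\<in>S. dpart A x z * adj (dpart A) z y) = 0" "(\<Sum>z\<in>S. adj (dpart A) x z * dpart A z y) = 0"
      using False by (auto simp: dpart_def adj_def intro!: sum.neutral)
    have "bpart (FF S \<beta> A) x y = 0" using False by (simp add: bpart_def)
    then show ?thesis using a by (simp add: mscale_def msub_def mmul_def)
  next
    case True
    have "bpart (FF S \<beta> A) x y = FF S \<beta> A x y" using True by (simp add: bpart_def)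
    also have "\<dots> = (if x \<in> S \<and> y \<in> S then (\<Sum>z\<in>S. 2 * (dpart A x z * adj (dpart A) z y - adj (dpart A) x z * dpart A z y)) else 0)"
      by (simp add: FF_entry term_b[OF g True])
    also have "\<dots> = mscale 2 (msub (mmul S (dpart A) (adj (dpart A))) (mmul S (adj (dpart A)) (dpart A))) x y"
      by (simp add: mscale_def msub_def mmul_def sum_subtractf flip: sum_distrib_left)
    finally show ?thesis .
  qed
qed

lemma FF_good:
  assumes g: "good S A"
  shows "good S (FF S \<beta> A)"
proof -
  have 1: "\<forall>x y. x \<notin> S \<or> y \<notin> S \<longrightarrow> FF S \<beta> A x y = 0" by (auto simp: FF_entry)
  have 2: "band (FF S \<beta> A)" unfolding band_def using term_band[OF g] by (simp add: FF_entry)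
  have 3: "adj (FF S \<beta> A) = FF S \<beta> A"
  proof (intro ext)
    fix x y
    have "cnj (laxB \<beta> A y z * A z x - A y z * laxB \<beta> A z x) = laxB \<beta> A x z * A z y - A x z * laxB \<beta> A z y" for z
      using laxB_skew[OF g, of \<beta> y z] laxB_skew[OF g, of \<beta> z x] good_herm[OF g, of x z] good_herm[OF g, of z y]
      by (simp add: algebra_simps)
    then show "adj (FF S \<beta> A) x y = FF S \<beta> A x y"
      by (auto simp: adj_def FF_entry)
  qed
  show ?thesis using 1 2 3 by (simp add: good_def)
qed


definition proj :: "'a set set \<Rightarrow> 'a op \<Rightarrow> 'a op" where
  "proj S A = (\<lambda>x y. if x \<in> S \<and> y \<in> S \<and> (card x = card y + 1 \<or> card y = card x + 1 \<or> card x = card y)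
      then (A x y + cnj (A y x)) / 2 else 0)"

lemma proj_good: "good S (proj S A)"
proof -
  have "adj (proj S A) = proj S A"
    by (auto simp: adj_def proj_def fun_eq_iff add.commute)
  then show ?thesis by (auto simp: good_def band_def proj_def)
qed

lemma good_proj: assumes g: "good S A" shows "proj S A = A"
proof (intro ext)
  fix x y
  show "proj S A x y = A x y"
    using good_herm[OF g, of y x] good_out[OF g, of x y] good_band[OF g, of x y]
    by (auto simp: proj_def)
qed

lemma dirac0_good: "good S (dirac0 S)"
proof -
  have "adj (dirac0 S) = dirac0 S"
    by (auto simp: dirac0_def adj_def madd_def fun_eq_iff add.commute)
  moreover have "band (dirac0 S)"
    by (auto simp: band_def dirac0_def madd_def adj_def ext_d_def)
  moreover have "\<forall>x y. x \<notin> S \<or> y \<notin> S \<longrightarrow> dirac0 S x y = 0"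
    by (auto simp: dirac0_def madd_def adj_def ext_d_def)
  ultimately show ?thesis by (simp add: good_def)
qed

lemma mmul_bound:
  assumes "\<And>p q. p \<in> S \<Longrightarrow> q \<in> S \<Longrightarrow> cmod (X p q) \<le> a"
    and "\<And>p q. p \<in> S \<Longrightarrow> q \<in> S \<Longrightarrow> cmod (Y p q) \<le> b"
    and "0 \<le> a"
  shows "cmod (mmul S X Y x y) \<le> real (card S) * a * b"
proof (cases "x \<in> S \<and> y \<in> S")
  case True
  have "cmod (mmul S X Y x y) \<le> (\<Sum>z\<in>S. cmod (X x z * Y z y))"
    using True by (simp add: mmul_def norm_sum)
  also have "\<dots> \<le> (\<Sum>z\<in>S. a * b)"
    using True assms by (intro sum_mono) (auto simp: norm_mult intro!: mult_mono)
  finally show ?thesis by simp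
next
  case False
  then have "mmul S X Y x y = 0" by (auto simp: mmul_def)
  moreover have "0 \<le> b" if "S \<noteq> {}" using assms(2) that by (meson all_not_in_conv norm_ge_zero order_trans)
  ultimately show ?thesis using assms(3) by (cases "S = {}") auto
qed

lemma entry_le_sum:
  assumes "finite S" "p \<in> S" "q \<in> S"
  shows "cmod (X p q) \<le> (\<Sum>j\<in>S \<times> S. cmod (X (fst j) (snd j)))"
proof -
  have "cmod (X (fst (p,q)) (snd (p,q))) \<le> (\<Sum>j\<in>S \<times> S. cmod (X (fst j) (snd j)))"
    using assms by (intro member_le_sum) auto
  then show ?thesis by simp
qed

lemma laxB_bound:
  assumes "\<And>p q. p \<in> S \<Longrightarrow> q \<in> S \<Longrightarrow> cmod (X p q) \<le> a"
    and "p \<in> S" "q \<in> S" "0 \<le> a"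
  shows "cmod (laxB \<beta> X p q) \<le> (2 + \<bar>\<beta>\<bar>) * a"
proof -
  have "cmod (laxB \<beta> X p q) \<le> cmod (if card p = card q + 1 then X p q else 0)
     + cmod (cnj (if card q = card p + 1 then X q p else 0)) + cmod (\<i> * of_real \<beta> * (if card p = card q then X p q else 0))"
    unfolding laxB_entry by (meson norm_triangle_ineq4 norm_triangle_le norm_triangle_ineq order_trans add_mono order_refl)
  also have "\<dots> \<le> a + a + \<bar>\<beta>\<bar> * a"
    using assms by (intro add_mono) (auto simp: norm_mult intro: mult_left_mono)
  finally show ?thesis by (simp add: algebra_simps)
qed

lemma laxB_msub: "laxB \<beta> (msub A B) = msub (laxB \<beta> A) (laxB \<beta> B)"
  by (auto simp: laxB_def msub_def madd_def mscale_def dpart_def bpart_def adj_def fun_eq_iff algebra_simps)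

lemma proj_msub: "proj S (msub A B) = msub (proj S A) (proj S B)"
  by (auto simp: proj_def msub_def fun_eq_iff field_simps)


lemma norm4: "cmod (a1*b1 + a2*b2 - a3*b3 - a4*b4) \<le> cmod a1 * cmod b1 + cmod a2 * cmod b2 + cmod a3 * cmod b3 + cmod a4 * cmod b4"
proof -
  have "cmod (a1*b1 + a2*b2 - a3*b3 - a4*b4) \<le> cmod (a1*b1) + cmod (a2*b2) + cmod (a3*b3) + cmod (a4*b4)"
    by (smt (verit) norm_triangle_ineq norm_triangle_ineq4)
  then show ?thesis by (simp add: norm_mult)
qed

lemma proj_norm: "cmod (proj S X x y) \<le> (cmod (X x y) + cmod (X y x)) / 2"
proof -
  have "cmod ((X x y + cnj (X y x)) / 2) \<le> (cmod (X x y) + cmod (X y x)) / 2"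
    by (simp add: norm_divide) (metis complex_mod_cnj norm_triangle_ineq)
  then show ?thesis by (auto simp: proj_def)
qed

locale defo =
  fixes S :: "'a::linorder set set" and \<beta> :: real and D :: "real \<Rightarrow> 'a op"
  assumes fin: "finite S"
    and D0: "D 0 = dirac0 S"
    and der: "\<And>t x y. ((\<lambda>s. D s x y) has_vector_derivative FF S \<beta> (D t) x y) (at t)"
begin

lemma D_cont: "continuous_on A (\<lambda>s. D s x y)"
  by (rule continuous_at_imp_continuous_on) (use has_vector_derivative_continuous[OF der] in auto)

lemma D_bound: "\<exists>B\<ge>0. \<forall>s\<in>{a..b}. \<forall>x\<in>S. \<forall>y\<in>S. cmod (D s x y) \<le> B"
proof (cases "a \<le> b")
  case True
  define N where "N = (\<lambda>s. \<Sum>j\<in>S \<times> S. cmod (D s (fst j) (snd j)))"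
  have "continuous_on {a..b} N" unfolding N_def
    by (intro continuous_intros continuous_on_norm D_cont)
  then obtain m where m: "m \<in> {a..b}" "\<forall>s\<in>{a..b}. N s \<le> N m"
    using continuous_attains_sup[of "{a..b}" N] True by auto
  have "\<forall>s\<in>{a..b}. \<forall>x\<in>S. \<forall>y\<in>S. cmod (D s x y) \<le> N m"
    using m entry_le_sum[OF fin] unfolding N_def by (meson order_trans)
  moreover have "0 \<le> N m" unfolding N_def by (auto intro: sum_nonneg)
  ultimately show ?thesis by blast
next
  case False then show ?thesis by auto
qed

lemma D_out: "x \<notin> S \<or> y \<notin> S \<Longrightarrow> D s x y = 0"
proof -
  assume a: "x \<notin> S \<or> y \<notin> S"
  have "((\<lambda>s. D s x y) has_vector_derivative 0) (at t within UNIV)" for t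
    using der[where t=t and x=x and y=y] a by (auto simp: FF_entry)
  then obtain c where "\<And>s. s \<in> UNIV \<Longrightarrow> D s x y = c"
    using has_vector_derivative_zero_constant[of UNIV "\<lambda>s. D s x y"] by auto
  then have "D s x y = D 0 x y" by (metis UNIV_I)
  also have "\<dots> = 0" using a good_out[OF dirac0_good] by (simp add: D0)
  finally show ?thesis .
qed

lemma good_D: "good S (D t)"
proof -
  define a where "a = min 0 t"
  define b where "b = max 0 t"
  obtain Bd where Bd0: "Bd \<ge> 0" and Bd: "\<And>s x y. s\<in>{a..b} \<Longrightarrow> x\<in>S \<Longrightarrow> y\<in>S \<Longrightarrow> cmod (D s x y) \<le> Bd"
    using D_bound[of a b] by blast
  define E where "E = (\<lambda>s (j::'a set \<times> 'a set). D s (fst j) (snd j) - proj S (D s) (fst j) (snd j))"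
  define E' where "E' = (\<lambda>s (j::'a set \<times> 'a set). FF S \<beta> (D s) (fst j) (snd j) - proj S (FF S \<beta> (D s)) (fst j) (snd j))"
  define K1 where "K1 = 4 * real (card S) * ((2 + \<bar>\<beta>\<bar>) * Bd)"
  have K1: "0 \<le> K1" using Bd0 by (simp add: K1_def)
  have derE: "((\<lambda>s. E s j) has_vector_derivative E' s j) (at s)" for s j
  proof -
    obtain x y where j: "j = (x,y)" by (cases j)
    have "((\<lambda>s. proj S (D s) x y) has_vector_derivative proj S (FF S \<beta> (D s)) x y) (at s)"
    proof (cases "x \<in> S \<and> y \<in> S \<and> (card x = card y + 1 \<or> card y = card x + 1 \<or> card x = card y)")
      case True
      have "((\<lambda>s. (D s x y + cnj (D s y x)) / 2) has_vector_derivative (FF S \<beta> (D s) x y + cnj (FF S \<beta> (D s) y x)) / 2) (at s)"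
        using der[where t=s and x=x and y=y] der[where t=s and x=y and y=x]
        by (auto intro!: derivative_eq_intros)
      then show ?thesis using True by (simp add: proj_def)
    next
      case False
      then have "(\<lambda>s. proj S (D s) x y) = (\<lambda>s. 0)" "proj S (FF S \<beta> (D s)) x y = 0"
        by (auto simp: proj_def)
      then show ?thesis by simp
    qed
    then show ?thesis unfolding E_def E'_def j
      by (auto intro!: derivative_intros der)
  qed
  have bnd: "cmod (E' s j) \<le> (2 * K1) * (\<Sum>i\<in>S \<times> S. cmod (E s i))" if s: "s \<in> {a..b}" and j: "j \<in> S \<times> S" for s j
  proof -
    define nE where "nE = (\<Sum>i\<in>S \<times> S. cmod (E s i))"
    define P where "P = proj S (D s)"
    define Em where "Em = msub (D s) P"
    define X where "X = msub (FF S \<beta> (D s)) (FF S \<beta> P)"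
    have nE0: "0 \<le> nE" unfolding nE_def by (auto intro: sum_nonneg)
    have Em_b: "cmod (Em p q) \<le> nE" if "p \<in> S" "q \<in> S" for p q
    proof -
      have "cmod (E s (p,q)) \<le> nE" unfolding nE_def
        using that by (intro member_le_sum[OF _ _ finite_cartesian_product[OF fin fin]]) auto
      then show ?thesis by (simp add: Em_def E_def P_def msub_def)
    qed
    have P_b: "cmod (P p q) \<le> Bd" if "p \<in> S" "q \<in> S" for p q
    proof -
      have "(cmod (D s p q) + cmod (D s q p)) / 2 \<le> Bd"
        using Bd[OF s that] Bd[OF s that(2,1)] by (simp add: field_simps)
      then show ?thesis using proj_norm[of S "D s" p q] unfolding P_def by (rule order_trans[rotated])
    qed
    have BD_b: "cmod (laxB \<beta> (D s) p q) \<le> (2 + \<bar>\<beta>\<bar>) * Bd" if "p \<in> S" "q \<in> S" for p q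
      by (rule laxB_bound[where S=S]) (use Bd[OF s] Bd0 that in auto)
    have BE_b: "cmod (laxB \<beta> Em p q) \<le> (2 + \<bar>\<beta>\<bar>) * nE" if "p \<in> S" "q \<in> S" for p q
      by (rule laxB_bound[where S=S]) (use Em_b nE0 that in auto)
    have X_b: "cmod (X p q) \<le> K1 * nE" if pq: "p \<in> S" "q \<in> S" for p q
    proof -
      have "X p q = (\<Sum>z\<in>S. laxB \<beta> (D s) p z * D s z q - D s p z * laxB \<beta> (D s) z q
                     - (laxB \<beta> P p z * P z q - P p z * laxB \<beta> P z q))"
        using pq by (simp add: X_def FF_entry msub_def sum_subtractf)
      also have "\<dots> = (\<Sum>z\<in>S. laxB \<beta> (D s) p z * Em z q + laxB \<beta> Em p z * P z q
                     - Em p z * laxB \<beta> (D s) z q - P p z * laxB \<beta> Em z q)"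
      proof (rule sum.cong)
        fix z
        have e1: "Em v w = D s v w - P v w" for v w by (simp add: Em_def msub_def)
        have e2: "laxB \<beta> Em v w = laxB \<beta> (D s) v w - laxB \<beta> P v w" for v w
          unfolding Em_def laxB_msub by (simp add: msub_def)
        show "laxB \<beta> (D s) p z * D s z q - D s p z * laxB \<beta> (D s) z q
                     - (laxB \<beta> P p z * P z q - P p z * laxB \<beta> P z q) = laxB \<beta> (D s) p z * Em z q + laxB \<beta> Em p z * P z q
                     - Em p z * laxB \<beta> (D s) z q - P p z * laxB \<beta> Em z q"
          unfolding e1 e2 by (simp add: algebra_simps)
      qed simp
      finally have "cmod (X p q) \<le> (\<Sum>z\<in>S. cmod (laxB \<beta> (D s) p z * Em z q + laxB \<beta> Em p z * P z q
                     - Em p z * laxB \<beta> (D s) z q - P p z * laxB \<beta> Em z q))"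
        by (simp add: norm_sum)
      also have "\<dots> \<le> (\<Sum>z\<in>S. 4 * ((2 + \<bar>\<beta>\<bar>) * Bd) * nE)"
      proof (rule sum_mono)
        fix z assume z: "z \<in> S"
        have "cmod (laxB \<beta> (D s) p z) * cmod (Em z q) \<le> ((2 + \<bar>\<beta>\<bar>) * Bd) * nE"
          using BD_b[OF pq(1) z] Em_b[OF z pq(2)] Bd0 by (intro mult_mono) auto
        moreover have "cmod (laxB \<beta> Em p z) * cmod (P z q) \<le> ((2 + \<bar>\<beta>\<bar>) * nE) * Bd"
          using BE_b[OF pq(1) z] P_b[OF z pq(2)] nE0 by (intro mult_mono) auto
        moreover have "cmod (Em p z) * cmod (laxB \<beta> (D s) z q) \<le> nE * ((2 + \<bar>\<beta>\<bar>) * Bd)"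
          using BD_b[OF z pq(2)] Em_b[OF pq(1) z] nE0 by (intro mult_mono) auto
        moreover have "cmod (P p z) * cmod (laxB \<beta> Em z q) \<le> Bd * ((2 + \<bar>\<beta>\<bar>) * nE)"
          using BE_b[OF z pq(2)] P_b[OF pq(1) z] Bd0 by (intro mult_mono) auto
        ultimately show "cmod (laxB \<beta> (D s) p z * Em z q + laxB \<beta> Em p z * P z q
                     - Em p z * laxB \<beta> (D s) z q - P p z * laxB \<beta> Em z q) \<le> 4 * ((2 + \<bar>\<beta>\<bar>) * Bd) * nE"
          using norm4[of "laxB \<beta> (D s) p z" "Em z q" "laxB \<beta> Em p z" "P z q" "Em p z" "laxB \<beta> (D s) z q" "P p z" "laxB \<beta> Em z q"]
          by (simp add: algebra_simps)
      qed
      also have "\<dots> = K1 * nE" by (simp add: K1_def)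
      finally show ?thesis .
    qed
    have FFP: "proj S (FF S \<beta> P) = FF S \<beta> P"
      by (rule good_proj, rule FF_good, simp add: P_def proj_good)
    obtain x y where jj: "j = (x,y)" "x \<in> S" "y \<in> S" using j by auto
    have "E' s j = X x y - proj S X x y"
      using fun_cong[OF fun_cong[OF FFP, of x], of y]
      unfolding E'_def jj X_def proj_msub by (simp add: msub_def)
    then have "cmod (E' s j) \<le> cmod (X x y) + (cmod (X x y) + cmod (X y x)) / 2"
      using proj_norm[of S X x y] by (metis norm_triangle_ineq4 add_left_mono order_trans)
    also have "\<dots> \<le> K1 * nE + (K1 * nE + K1 * nE) / 2"
      using X_b[OF jj(2,3)] X_b[OF jj(3,2)] by (intro add_mono divide_right_mono) auto
    also have "\<dots> = (2 * K1) * nE" by simp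
    finally show ?thesis by (simp add: nE_def)
  qed
  have E0: "E 0 j = 0" for j
    using good_proj[OF dirac0_good, of S] by (simp add: E_def D0)
  have zero: "E t j = 0" if "j \<in> S \<times> S" for j
    by (rule gronwall_fin[OF finite_cartesian_product[OF fin fin] derE bnd _ _ E0 _ that])
       (use K1 in \<open>auto simp: a_def b_def\<close>)
  have "D t = proj S (D t)"
  proof (intro ext)
    fix x y
    show "D t x y = proj S (D t) x y"
    proof (cases "x \<in> S \<and> y \<in> S")
      case True then show ?thesis using zero[of "(x,y)"] by (simp add: E_def)
    next
      case False then show ?thesis using D_out by (auto simp: proj_def)
    qed
  qed
  then show ?thesis by (metis proj_good)
qed

end


lemma bounded_entries:
  fixes a b :: real and B :: "real \<Rightarrow> 'a op"
  assumes fin: "finite S" and c: "\<And>x y. continuous_on {a..b} (\<lambda>s. B s x y)"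
  shows "\<exists>Bd\<ge>0. \<forall>s\<in>{a..b}. \<forall>x\<in>S. \<forall>y\<in>S. cmod (B s x y) \<le> Bd"
proof (cases "a \<le> b")
  case True
  define N where "N = (\<lambda>s. \<Sum>j\<in>S \<times> S. cmod (B s (fst j) (snd j)))"
  have cN: "continuous_on {a..b} N" unfolding N_def
    by (intro continuous_intros continuous_on_norm c)
  have "\<exists>x\<in>{a..b}. \<forall>y\<in>{a..b}. N y \<le> N x"
    by (rule continuous_attains_sup[OF compact_Icc]) (use True cN in auto)
  then obtain m where m: "m \<in> {a..b}" "\<forall>s\<in>{a..b}. N s \<le> N m" by blast
  have "\<forall>s\<in>{a..b}. \<forall>x\<in>S. \<forall>y\<in>S. cmod (B s x y) \<le> N m"
    using m entry_le_sum[OF fin] unfolding N_def by (meson order_trans)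
  moreover have "0 \<le> N m" unfolding N_def by (auto intro: sum_nonneg)
  ultimately show ?thesis by blast
next
  case False then show ?thesis by auto
qed

lemma lin_gronwall:
  assumes fin: "finite S"
    and der: "\<And>s x y. ((\<lambda>s. X s x y) has_vector_derivative madd (mmul S (X s) (Pm s)) (mmul S (Qm s) (X s)) x y) (at s)"
    and cp: "\<And>x y. continuous_on UNIV (\<lambda>s. Pm s x y)"
    and cq: "\<And>x y. continuous_on UNIV (\<lambda>s. Qm s x y)"
    and z: "\<And>x y. x \<in> S \<Longrightarrow> y \<in> S \<Longrightarrow> X tz x y = 0"
    and xy: "x \<in> S" "y \<in> S"
  shows "X t x y = 0"
proof -
  define a where "a = min tz t"
  define b where "b = max tz t"
  obtain Bdp where Bdp0: "Bdp \<ge> 0" and Bdp: "\<And>s x y. s\<in>{a..b} \<Longrightarrow> x\<in>S \<Longrightarrow> y\<in>S \<Longrightarrow> cmod (Pm s x y) \<le> Bdp"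
  proof -
    have cB: "\<And>x y. continuous_on {a..b} (\<lambda>s. Pm s x y)" by (rule continuous_on_subset[OF cp]) auto
    from bounded_entries[where a=a and b=b and B=Pm, OF fin cB] show ?thesis using that by blast
  qed
  obtain Bdq where Bdq0: "Bdq \<ge> 0" and Bdq: "\<And>s x y. s\<in>{a..b} \<Longrightarrow> x\<in>S \<Longrightarrow> y\<in>S \<Longrightarrow> cmod (Qm s x y) \<le> Bdq"
  proof -
    have cB: "\<And>x y. continuous_on {a..b} (\<lambda>s. Qm s x y)" by (rule continuous_on_subset[OF cq]) auto
    from bounded_entries[where a=a and b=b and B=Qm, OF fin cB] show ?thesis using that by blast
  qed
  define E where "E = (\<lambda>s (j::'a set \<times> 'a set). X s (fst j) (snd j))"
  define E' where "E' = (\<lambda>s (j::'a set \<times> 'a set). madd (mmul S (X s) (Pm s)) (mmul S (Qm s) (X s)) (fst j) (snd j))"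
  define K where "K = real (card S) * (Bdp + Bdq)"
  have K: "0 \<le> K" using Bdp0 Bdq0 by (simp add: K_def)
  have derE: "((\<lambda>s. E s j) has_vector_derivative E' s j) (at s)" for s j
    unfolding E_def E'_def by (rule der)
  have bnd: "cmod (E' s j) \<le> K * (\<Sum>i\<in>S \<times> S. cmod (E s i))" if s: "s \<in> {a..b}" and j: "j \<in> S \<times> S" for s j
  proof -
    define nE where "nE = (\<Sum>i\<in>S \<times> S. cmod (E s i))"
    have nE0: "0 \<le> nE" unfolding nE_def by (auto intro: sum_nonneg)
    have X_b: "cmod (X s p q) \<le> nE" if "p \<in> S" "q \<in> S" for p q
    proof -
      have "cmod (E s (p,q)) \<le> nE" unfolding nE_def
        using that by (intro member_le_sum[OF _ _ finite_cartesian_product[OF fin fin]]) auto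
      then show ?thesis by (simp add: E_def)
    qed
    have "cmod (E' s j) \<le> cmod (mmul S (X s) (Pm s) (fst j) (snd j)) + cmod (mmul S (Qm s) (X s) (fst j) (snd j))"
      by (simp add: E'_def madd_def norm_triangle_ineq)
    also have "\<dots> \<le> real (card S) * nE * Bdp + real (card S) * Bdq * nE"
      by (intro add_mono mmul_bound) (use X_b Bdp[OF s] Bdq[OF s] nE0 Bdq0 in auto)
    also have "\<dots> = K * nE" by (simp add: K_def algebra_simps)
    finally show ?thesis by (simp add: nE_def)
  qed
  have E0: "E tz j = 0" if "j \<in> S \<times> S" for j using z that by (auto simp: E_def)
  have "E t (x,y) = 0"
    by (rule gronwall_fin[OF finite_cartesian_product[OF fin fin] derE bnd K _ E0])
       (use xy in \<open>auto simp: a_def b_def\<close>)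
  then show ?thesis by (simp add: E_def)
qed

lemma der_mmul:
  assumes fin: "finite S"
    and dX: "\<And>x y. ((\<lambda>s. X s x y) has_vector_derivative X' x y) (at t)"
    and dY: "\<And>x y. ((\<lambda>s. Y s x y) has_vector_derivative Y' x y) (at t)"
  shows "((\<lambda>s. mmul S (X s) (Y s) x y) has_vector_derivative madd (mmul S X' (Y t)) (mmul S (X t) Y') x y) (at t)"
proof (cases "x \<in> S \<and> y \<in> S")
  case True
  have "((\<lambda>s. \<Sum>z\<in>S. X s x z * Y s z y) has_vector_derivative (\<Sum>z\<in>S. X t x z * Y' z y + X' x z * Y t z y)) (at t)"
    by (intro has_vector_derivative_sum has_vector_derivative_mult dX dY)
  then show ?thesis using True by (simp add: mmul_def madd_def sum.distrib algebra_simps)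
next
  case False
  then have "(\<lambda>s. mmul S (X s) (Y s) x y) = (\<lambda>s. 0)" "madd (mmul S X' (Y t)) (mmul S (X t) Y') x y = 0"
    by (auto simp: mmul_def madd_def)
  then show ?thesis by simp
qed


lemma good_dec: "good S A \<Longrightarrow> A = madd (madd (dpart A) (adj (dpart A))) (bpart A)"
  by (rule ext, rule ext, frule good_herm)
     (auto simp: madd_def dpart_def bpart_def adj_def dest: good_band)

lemma good_bherm: assumes g: "good S A" shows "adj (bpart A) = bpart A"
proof (intro ext)
  fix x y
  have "A y x = cnj (A x y)" by (rule good_herm[OF g])
  then show "adj (bpart A) x y = bpart A x y" by (auto simp: adj_def bpart_def)
qed

lemma mscale_mscale[simp]: "mscale a (mscale b A) = mscale (a * b) A"
  by (simp add: mscale_def fun_eq_iff)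
lemma mscale_Z[simp]: "mscale a Z = Z" by (simp add: mscale_def Z_def fun_eq_iff)
lemma madd_Z[simp]: "madd Z A = A" "madd A Z = A" by (simp_all add: madd_def Z_def fun_eq_iff)
lemma msub_Z[simp]: "msub A Z = A" "msub Z A = mscale (-1) A" by (simp_all add: msub_def mscale_def Z_def fun_eq_iff)

lemma der_madd:
  assumes "((\<lambda>s. A s x y) has_vector_derivative A' x y) (at t)" "((\<lambda>s. B s x y) has_vector_derivative B' x y) (at t)"
  shows "((\<lambda>s. madd (A s) (B s) x y) has_vector_derivative madd A' B' x y) (at t)"
  using assms by (simp add: madd_def has_vector_derivative_add)

lemma adj_Z_iff: "adj A = Z \<Longrightarrow> A = Z"
  by (metis adj_adj adj_Z)

lemmas mm_dist = mmul_madd_left mmul_madd_right mmul_msub_left mmul_msub_right mmul_mscale_left mmul_mscale_right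

locale defo2 = defo +
  assumes d0sq: "mmul S (ext_d S) (ext_d S) = Z"
begin

abbreviation "U t \<equiv> dpart (D t)"
abbreviation "W t \<equiv> adj (dpart (D t))"
abbreviation "Bb t \<equiv> bpart (D t)"
abbreviation "cc \<equiv> 1 - \<i> * complex_of_real \<beta>"

lemma D_dec: "D t = madd (madd (U t) (W t)) (Bb t)" by (rule good_dec[OF good_D])
lemma B_herm: "adj (Bb t) = Bb t" by (rule good_bherm[OF good_D])

lemma der_U: "((\<lambda>s. U s x y) has_vector_derivative mscale cc (msub (mmul S (U t) (Bb t)) (mmul S (Bb t) (U t))) x y) (at t)"
proof -
  have "((\<lambda>s. U s x y) has_vector_derivative dpart (FF S \<beta> (D t)) x y) (at t)"
    by (cases "card x = card y + 1") (auto simp: dpart_def der)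
  then show ?thesis by (simp add: FF_dpart[OF good_D])
qed

lemma der_B: "((\<lambda>s. Bb s x y) has_vector_derivative mscale 2 (msub (mmul S (U t) (W t)) (mmul S (W t) (U t))) x y) (at t)"
proof -
  have "((\<lambda>s. Bb s x y) has_vector_derivative bpart (FF S \<beta> (D t)) x y) (at t)"
    by (cases "card x = card y") (auto simp: bpart_def der)
  then show ?thesis by (simp add: FF_bpart[OF good_D])
qed

lemma der_W: "((\<lambda>s. W s x y) has_vector_derivative mscale (cnj cc) (msub (mmul S (Bb t) (W t)) (mmul S (W t) (Bb t))) x y) (at t)"
proof -
  have "((\<lambda>s. W s x y) has_vector_derivative cnj (mscale cc (msub (mmul S (U t) (Bb t)) (mmul S (Bb t) (U t))) y x)) (at t)"
    unfolding adj_def by (intro has_vector_derivative_cnj der_U)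
  also have "cnj (mscale cc (msub (mmul S (U t) (Bb t)) (mmul S (Bb t) (U t))) y x)
     = adj (mscale cc (msub (mmul S (U t) (Bb t)) (mmul S (Bb t) (U t)))) x y" by (simp add: adj_def)
  also have "\<dots> = mscale (cnj cc) (msub (mmul S (Bb t) (W t)) (mmul S (W t) (Bb t))) x y"
    by (simp add: adj_mscale adj_msub adj_mmul B_herm)
  finally show ?thesis .
qed

lemma cont_B: "continuous_on A (\<lambda>s. Bb s x y)"
  by (rule continuous_at_imp_continuous_on) (use has_vector_derivative_continuous[OF der_B] in auto)

lemma cont_scale_B: "continuous_on A (\<lambda>s. mscale k (Bb s) x y)"
  unfolding mscale_def by (intro continuous_intros cont_B)

lemma U0: "U 0 = ext_d S"
  by (auto simp: D0 dirac0_def dpart_def madd_def adj_def ext_d_def fun_eq_iff)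
lemma B0: "Bb 0 = Z"
  by (auto simp: D0 dirac0_def bpart_def madd_def adj_def ext_d_def Z_def fun_eq_iff)

lemma ext_mmul_Z:
  assumes "\<And>x y. x \<in> S \<Longrightarrow> y \<in> S \<Longrightarrow> mmul S A B x y = 0"
  shows "mmul S A B = Z"
  using assms by (auto simp: fun_eq_iff Z_def mmul_def)

lemma inv_UU: "mmul S (U t) (U t) = Z"
proof (rule ext_mmul_Z)
  fix x y assume xy: "x \<in> S" "y \<in> S"
  have der2: "((\<lambda>s. mmul S (U s) (U s) x y) has_vector_derivative
      madd (mmul S (mmul S (U s) (U s)) (mscale cc (Bb s))) (mmul S (mscale (- cc) (Bb s)) (mmul S (U s) (U s))) x y) (at s)" for s x y
  proof -
    have e: "madd (mmul S (mscale cc (msub (mmul S (U s) (Bb s)) (mmul S (Bb s) (U s)))) (U s))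
                  (mmul S (U s) (mscale cc (msub (mmul S (U s) (Bb s)) (mmul S (Bb s) (U s)))))
        = madd (mmul S (mmul S (U s) (U s)) (mscale cc (Bb s))) (mmul S (mscale (- cc) (Bb s)) (mmul S (U s) (U s)))"
      by (simp only: mm_dist mmul_assoc[OF fin]) (simp add: fun_eq_iff madd_def msub_def mscale_def algebra_simps)
    have "((\<lambda>s. mmul S (U s) (U s) x y) has_vector_derivative
      madd (mmul S (mscale cc (msub (mmul S (U s) (Bb s)) (mmul S (Bb s) (U s)))) (U s))
                  (mmul S (U s) (mscale cc (msub (mmul S (U s) (Bb s)) (mmul S (Bb s) (U s))))) x y) (at s)"
      by (rule der_mmul[OF fin]; rule der_U)
    then show ?thesis unfolding e .
  qed
  show "mmul S (U t) (U t) x y = 0"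
    apply (rule lin_gronwall[where X="\<lambda>s. mmul S (U s) (U s)" and tz=0])
    apply (rule fin)
    apply (rule der2)
    apply (rule cont_scale_B)
    apply (rule cont_scale_B)
    apply (simp add: U0 d0sq Z_def)
    apply (rule xy)+
    done
qed


lemma UU_X: "mmul S (U t) (mmul S (U t) X) = Z"
  by (simp add: mmul_assoc[OF fin, symmetric] inv_UU)
lemma inv_WW: "mmul S (W t) (W t) = Z"
  by (metis adj_mmul adj_Z inv_UU)
lemma WW_X: "mmul S (W t) (mmul S (W t) X) = Z"
  by (simp add: mmul_assoc[OF fin, symmetric] inv_WW)

lemma inv_UB: "madd (mmul S (U t) (Bb t)) (mmul S (Bb t) (U t)) = Z"
proof (rule ext, rule ext)
  fix x y
  show "madd (mmul S (U t) (Bb t)) (mmul S (Bb t) (U t)) x y = Z x y"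
  proof (cases "x \<in> S \<and> y \<in> S")
    case False then show ?thesis by (auto simp: madd_def mmul_def Z_def)
  next
    case True
    then have xy: "x \<in> S" "y \<in> S" by auto
    define X where "X = (\<lambda>s. madd (mmul S (U s) (Bb s)) (mmul S (Bb s) (U s)))"
    have der2: "((\<lambda>s. X s x y) has_vector_derivative
        madd (mmul S (X s) (mscale cc (Bb s))) (mmul S (mscale (- cc) (Bb s)) (X s)) x y) (at s)" for s x y
    proof -
      let ?U' = "mscale cc (msub (mmul S (U s) (Bb s)) (mmul S (Bb s) (U s)))"
      let ?B' = "mscale 2 (msub (mmul S (U s) (W s)) (mmul S (W s) (U s)))"
      have e: "madd (madd (mmul S ?U' (Bb s)) (mmul S (U s) ?B')) (madd (mmul S ?B' (U s)) (mmul S (Bb s) ?U'))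
        = madd (mmul S (X s) (mscale cc (Bb s))) (mmul S (mscale (- cc) (Bb s)) (X s))"
        unfolding X_def
        by (simp only: mm_dist mmul_assoc[OF fin] UU_X inv_UU mmul_Z_right mmul_Z_left)
           (simp add: fun_eq_iff madd_def msub_def mscale_def Z_def algebra_simps)
      have "((\<lambda>s. X s x y) has_vector_derivative
         madd (madd (mmul S ?U' (Bb s)) (mmul S (U s) ?B')) (madd (mmul S ?B' (U s)) (mmul S (Bb s) ?U')) x y) (at s)"
        unfolding X_def by (rule der_madd; rule der_mmul[OF fin]; rule der_U der_B)
      then show ?thesis unfolding e .
    qed
    have "X t x y = 0"
      apply (rule lin_gronwall[where X=X and tz=0])
      apply (rule fin)
      apply (rule der2)
      apply (rule cont_scale_B)
      apply (rule cont_scale_B)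
      apply (simp add: X_def B0, simp add: Z_def)
      apply (rule xy)+
      done
    then show ?thesis by (simp add: X_def Z_def)
  qed
qed

end


context defo2 begin

lemma UB: "mmul S (U t) (Bb t) = mscale (-1) (mmul S (Bb t) (U t))"
proof -
  have "madd (mmul S (U t) (Bb t)) (mmul S (Bb t) (U t)) x y = 0" for x y
    using inv_UB[of t] by (simp add: Z_def)
  then show ?thesis by (auto simp: fun_eq_iff madd_def mscale_def eq_neg_iff_add_eq_0)
qed

lemma UB_X: "mmul S (U t) (mmul S (Bb t) X) = mscale (-1) (mmul S (Bb t) (mmul S (U t) X))"
  by (simp add: mmul_assoc[OF fin, symmetric] UB mmul_mscale_left)

lemma WB: "mmul S (W t) (Bb t) = mscale (-1) (mmul S (Bb t) (W t))"
proof -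
  have "adj (madd (mmul S (U t) (Bb t)) (mmul S (Bb t) (U t))) = Z" using inv_UB[of t] by simp
  then have "madd (mmul S (Bb t) (W t)) (mmul S (W t) (Bb t)) = Z"
    by (simp add: adj_madd adj_mmul B_herm)
  then have "madd (mmul S (W t) (Bb t)) (mmul S (Bb t) (W t)) x y = 0" for x y
    by (simp add: Z_def fun_eq_iff madd_def add.commute)
  then show ?thesis by (auto simp: fun_eq_iff madd_def mscale_def eq_neg_iff_add_eq_0)
qed

lemma WB_X: "mmul S (W t) (mmul S (Bb t) X) = mscale (-1) (mmul S (Bb t) (mmul S (W t) X))"
  by (simp add: mmul_assoc[OF fin, symmetric] WB mmul_mscale_left)

lemmas nrm = mm_dist mmul_assoc[OF fin] UU_X inv_UU WW_X inv_WW UB_X UB WB_X WB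
  mmul_Z_left mmul_Z_right madd_Z msub_Z mscale_Z mscale_mscale

lemma FF_dec: "FF S \<beta> (D t) = madd (madd (mscale cc (msub (mmul S (U t) (Bb t)) (mmul S (Bb t) (U t))))
    (mscale (cnj cc) (msub (mmul S (Bb t) (W t)) (mmul S (W t) (Bb t)))))
    (mscale 2 (msub (mmul S (U t) (W t)) (mmul S (W t) (U t))))"
  apply (subst good_dec[OF FF_good[OF good_D]])
  apply (simp only: FF_dpart[OF good_D] FF_bpart[OF good_D] adj_mscale adj_msub adj_mmul adj_adj B_herm)
  done

lemma DD_const: "mmul S (D t) (D t) = mmul S (dirac0 S) (dirac0 S)"
proof -
  have z: "madd (mmul S (FF S \<beta> (D s)) (D s)) (mmul S (D s) (FF S \<beta> (D s))) = Z" for s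
  proof -
    let ?E = "madd (madd (U s) (W s)) (Bb s)"
    let ?F = "madd (madd (mscale cc (msub (mmul S (U s) (Bb s)) (mmul S (Bb s) (U s))))
    (mscale (cnj cc) (msub (mmul S (Bb s) (W s)) (mmul S (W s) (Bb s)))))
    (mscale 2 (msub (mmul S (U s) (W s)) (mmul S (W s) (U s))))"
    have "madd (mmul S ?F ?E) (mmul S ?E ?F) = Z"
      apply (simp only: nrm)
      apply (simp add: fun_eq_iff madd_def msub_def mscale_def Z_def algebra_simps)
      done
    moreover have "madd (mmul S (FF S \<beta> (D s)) (D s)) (mmul S (D s) (FF S \<beta> (D s))) = madd (mmul S ?F ?E) (mmul S ?E ?F)"
      by (simp only: FF_dec[of s] D_dec[of s, symmetric])
    ultimately show ?thesis by simp
  qed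
  have "((\<lambda>s. mmul S (D s) (D s) x y) has_vector_derivative 0) (at s within UNIV)" for s x y
  proof -
    have "((\<lambda>s. mmul S (D s) (D s) x y) has_vector_derivative
       madd (mmul S (FF S \<beta> (D s)) (D s)) (mmul S (D s) (FF S \<beta> (D s))) x y) (at s)"
      by (rule der_mmul[OF fin]; rule der)
    then show ?thesis using z[of s] by (simp add: Z_def)
  qed
  then have "mmul S (D t) (D t) x y = mmul S (D 0) (D 0) x y" for x y
    using has_vector_derivative_zero_constant[of UNIV "\<lambda>s. mmul S (D s) (D s) x y"]
    by (metis UNIV_I convex_UNIV)
  then show ?thesis by (auto simp: D0 fun_eq_iff)
qed

end


definition ip :: "'a set set \<Rightarrow> ('a set \<Rightarrow> complex) \<Rightarrow> ('a set \<Rightarrow> complex) \<Rightarrow> complex" where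
  "ip S f g = (\<Sum>x\<in>S. cnj (f x) * g x)"

lemma ip_mvec: "ip S f (mvec S A g) = ip S (mvec S (adj A) f) g"
proof -
  have "ip S f (mvec S A g) = (\<Sum>x\<in>S. \<Sum>y\<in>S. cnj (f x) * A x y * g y)"
    by (simp add: ip_def mvec_def sum_distrib_left mult.assoc)
  also have "\<dots> = (\<Sum>y\<in>S. \<Sum>x\<in>S. cnj (f x) * A x y * g y)" by (rule sum.swap)
  also have "\<dots> = ip S (mvec S (adj A) f) g"
    by (simp add: ip_def mvec_def adj_def sum_distrib_right sum_distrib_left mult_ac)
  finally show ?thesis .
qed

lemma ip_self: "ip S f f = of_real (\<Sum>x\<in>S. (cmod (f x))\<^sup>2)"
  unfolding ip_def of_real_sum complex_norm_square by (simp add: mult.commute)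

lemma ip_scale: "ip S f (\<lambda>x. c * g x) = c * ip S f g"
  by (simp add: ip_def sum_distrib_left algebra_simps)

lemma ip_self_zero:
  assumes "finite S" "f \<in> vecs S" "ip S f f = 0"
  shows "f = (\<lambda>_. 0)"
proof
  fix x
  have "(\<Sum>x\<in>S. (cmod (f x))\<^sup>2) = 0" using assms(3) unfolding ip_self by (simp only: of_real_eq_0_iff)
  then have "\<forall>x\<in>S. (cmod (f x))\<^sup>2 = 0" using sum_nonneg_eq_0_iff[OF assms(1), of "\<lambda>x. (cmod (f x))\<^sup>2"] by simp
  then show "f x = 0" using assms(2) by (cases "x \<in> S") (auto simp: vecs_def)
qed

lemma mvec_vecs: "mvec S A f \<in> vecs S" by (simp add: mvec_def vecs_def)

lemma mvec_madd: "mvec S (madd A B) f = (\<lambda>x. mvec S A f x + mvec S B f x)"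
  by (auto simp: mvec_def madd_def sum.distrib algebra_simps fun_eq_iff)

lemma mvec_mscale: "mvec S (mscale c A) f = (\<lambda>x. c * mvec S A f x)"
  by (auto simp: mvec_def mscale_def sum_distrib_left algebra_simps fun_eq_iff)

lemma mvec_msub: "mvec S (msub A B) f = (\<lambda>x. mvec S A f x - mvec S B f x)"
  by (auto simp: mvec_def msub_def sum_subtractf algebra_simps fun_eq_iff)

lemma mvec_0[simp]: "mvec S A (\<lambda>_. 0) = (\<lambda>_. 0)" by (simp add: mvec_def fun_eq_iff)
lemma mvec_Z[simp]: "mvec S Z f = (\<lambda>_. 0)" by (simp add: mvec_def Z_def fun_eq_iff)

lemma ip_add_right: "ip S f (\<lambda>x. g x + h x) = ip S f g + ip S f h"
  by (simp add: ip_def sum.distrib algebra_simps)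
lemma ip_0: "ip S f (\<lambda>_. 0) = 0" by (simp add: ip_def)

lemma ip_psd: "ip S f (mvec S (mmul S A (adj A)) f) = ip S (mvec S (adj A) f) (mvec S (adj A) f)"
  by (simp add: mvec_mmul ip_mvec)

lemma ker_psd:
  assumes "finite S" "mvec S (mmul S A (adj A)) f = (\<lambda>_. 0)"
  shows "mvec S (adj A) f = (\<lambda>_. 0)"
  using ip_self_zero[OF assms(1) mvec_vecs, of "adj A" f] ip_psd[of S f A] assms(2)
  by (simp add: ip_0)

lemma ker_psd2:
  assumes fin: "finite S" and z: "mvec S (madd (mmul S A (adj A)) (mmul S B (adj B))) f = (\<lambda>_. 0)"
  shows "mvec S (adj A) f = (\<lambda>_. 0) \<and> mvec S (adj B) f = (\<lambda>_. 0)"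
proof -
  define a where "a = (\<Sum>x\<in>S. (cmod (mvec S (adj A) f x))\<^sup>2)"
  define b where "b = (\<Sum>x\<in>S. (cmod (mvec S (adj B) f x))\<^sup>2)"
  have "0 = ip S f (mvec S (madd (mmul S A (adj A)) (mmul S B (adj B))) f)" using z by (simp add: ip_0)
  also have "\<dots> = of_real a + of_real b"
    unfolding mvec_madd ip_add_right ip_psd ip_self a_def b_def ..
  finally have "a + b = 0" by (metis of_real_0 of_real_add of_real_eq_iff)
  moreover have "a \<ge> 0" "b \<ge> 0" by (auto simp: a_def b_def intro: sum_nonneg)
  ultimately have "a = 0" "b = 0" by auto
  then have "ip S (mvec S (adj A) f) (mvec S (adj A) f) = 0" "ip S (mvec S (adj B) f) (mvec S (adj B) f) = 0"
    unfolding ip_self a_def b_def by simp_all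
  then show ?thesis using ip_self_zero[OF fin mvec_vecs] by blast
qed

lemma eig_psd:
  assumes fin: "finite S" and h: "adj A = A" and e: "eigenvalue S (mmul S A A) c"
  shows "Im c = 0 \<and> Re c \<ge> 0"
proof -
  obtain f where f: "f \<in> vecs S" "f \<noteq> (\<lambda>_. 0)" "mvec S (mmul S A A) f = (\<lambda>x. c * f x)"
    using e by (auto simp: eigenvalue_def)
  define r where "r = (\<Sum>x\<in>S. (cmod (f x))\<^sup>2)"
  define q where "q = (\<Sum>x\<in>S. (cmod (mvec S A f x))\<^sup>2)"
  have ipr: "ip S f f = of_real r" by (simp only: ip_self r_def)
  have "r \<noteq> 0" using ip_self_zero[OF fin f(1)] f(2) ipr by auto
  moreover have "r \<ge> 0" "q \<ge> 0" by (auto simp: r_def q_def intro: sum_nonneg)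
  ultimately have r: "r > 0" by simp
  have "c * of_real r = ip S f (\<lambda>x. c * f x)"
    by (simp add: ip_scale ipr)
  also have "\<dots> = ip S f (mvec S (mmul S A (adj A)) f)" using f(3) h by simp
  also have "\<dots> = ip S (mvec S (adj A) f) (mvec S (adj A) f)" by (rule ip_psd)
  also have "\<dots> = of_real q" unfolding h ip_self q_def ..
  finally have "c = of_real (q / r)" using r by (simp add: field_simps)
  then show ?thesis using r \<open>q \<ge> 0\<close> by simp
qed


context defo2 begin

abbreviation "Rm t \<equiv> mmul S (U t) (W t)"
abbreviation "Sm t \<equiv> mmul S (W t) (U t)"
abbreviation "Vm t \<equiv> mmul S (Bb t) (Bb t)"
abbreviation "Cm t \<equiv> madd (U t) (W t)"
abbreviation "Mm t \<equiv> mmul S (Cm t) (Cm t)"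
abbreviation "Lm \<equiv> mmul S (dirac0 S) (dirac0 S)"

lemma M_eq: "Mm t = madd (Rm t) (Sm t)"
  by (simp only: nrm) (simp add: fun_eq_iff madd_def)

lemma L_eq: "Lm = madd (madd (Rm t) (Sm t)) (Vm t)"
proof -
  have "Lm = mmul S (D t) (D t)" by (rule DD_const[symmetric])
  also have "\<dots> = mmul S (madd (madd (U t) (W t)) (Bb t)) (madd (madd (U t) (W t)) (Bb t))"
    by (simp only: D_dec[of t, symmetric])
  also have "\<dots> = madd (madd (Rm t) (Sm t)) (Vm t)"
    by (simp only: nrm) (simp add: fun_eq_iff madd_def mscale_def)
  finally show ?thesis .
qed

lemma L_eq2: "Lm = madd (Mm t) (Vm t)" by (simp only: M_eq L_eq)

lemma dirac0_herm: "adj (dirac0 S) = dirac0 S" using dirac0_good[of S] unfolding good_def by blast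

lemma sa_all: "\<forall>X\<in>{Mm t, Lm, Vm t, Rm t, Sm t}. self_adjoint X"
proof -
  have "adj (Cm t) = Cm t" by (simp only: adj_madd adj_adj) (simp add: madd_def fun_eq_iff add.commute)
  then show ?thesis
    by (simp add: self_adjoint_def adj_mmul dirac0_herm B_herm)
qed

lemma comm_all: "\<forall>X\<in>{Mm t, Lm, Vm t, Rm t, Sm t}. \<forall>Y\<in>{Mm t, Lm, Vm t, Rm t, Sm t}. mmul S X Y = mmul S Y X"
  unfolding L_eq[of t] M_eq[of t]
  apply (simp only: ball_simps insert_iff empty_iff simp_thms)
  apply (simp only: nrm)
  apply (simp add: fun_eq_iff madd_def mscale_def algebra_simps)
  done

end


lemma mvec_as_mmul: "x \<in> S \<Longrightarrow> mvec S A f x = mmul S A (\<lambda>z y. f z) x x"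
  by (simp add: mvec_def mmul_def)

lemma ker_inv_gen:
  assumes fin: "finite S"
    and derA: "\<And>s x y. ((\<lambda>s. A s x y) has_vector_derivative mmul S (Qm s) (A s) x y) (at s)"
    and cQ: "\<And>x y. continuous_on UNIV (\<lambda>s. Qm s x y)"
    and z: "mvec S (A t1) f = (\<lambda>_. 0)"
  shows "mvec S (A t2) f = (\<lambda>_. 0)"
proof
  fix x
  show "mvec S (A t2) f x = 0"
  proof (cases "x \<in> S")
    case False then show ?thesis by (simp add: mvec_def)
  next
    case True
    define Fm where "Fm = (\<lambda>(z::'a set) (y::'a set). f z)"
    define G where "G = (\<lambda>s. mmul S (A s) Fm)"
    have derG: "((\<lambda>s. G s x y) has_vector_derivative madd (mmul S (G s) Z) (mmul S (Qm s) (G s)) x y) (at s)" for s x y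
    proof -
      have "((\<lambda>s. G s x y) has_vector_derivative madd (mmul S (mmul S (Qm s) (A s)) Fm) (mmul S (A s) Z) x y) (at s)"
        unfolding G_def by (rule der_mmul[OF fin], rule derA, simp add: Z_def)
      then show ?thesis by (simp add: mmul_assoc[OF fin] G_def)
    qed
    have "G t2 x x = 0"
      apply (rule lin_gronwall[where X=G and tz=t1 and Pm="\<lambda>s. Z"])
      apply (rule fin)
      apply (rule derG)
      apply (simp add: Z_def)
      apply (rule cQ)
      subgoal for x y
      proof -
        assume "x \<in> S" "y \<in> S"
        then have "G t1 x y = mvec S (A t1) f x" by (simp add: G_def Fm_def mmul_def mvec_def)
        then show ?thesis using z by simp
      qed
      apply (rule True)+
      done
    then show ?thesis using True by (simp add: G_def Fm_def mvec_as_mmul)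
  qed
qed

lemma der_ipmv:
  assumes fin: "finite S" and d: "\<And>x y. ((\<lambda>s. A s x y) has_vector_derivative A' x y) (at t)"
  shows "((\<lambda>s. ip S g (mvec S (A s) g)) has_vector_derivative ip S g (mvec S A' g)) (at t)"
proof -
  have eq: "ip S g (mvec S X g) = (\<Sum>x\<in>S. \<Sum>y\<in>S. cnj (g x) * (X x y * g y))" for X
    by (simp add: ip_def mvec_def sum_distrib_left)
  show ?thesis unfolding eq
    by (intro has_vector_derivative_sum has_vector_derivative_mult_right has_vector_derivative_mult_left d)
qed
context defo2 begin

lemma der_R: "((\<lambda>s. Rm s x y) has_vector_derivative mmul S (mscale (-4) (Bb t)) (Rm t) x y) (at t)"
proof -
  have "((\<lambda>s. Rm s x y) has_vector_derivative madd (mmul S (mscale cc (msub (mmul S (U t) (Bb t)) (mmul S (Bb t) (U t)))) (W t))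
      (mmul S (U t) (mscale (cnj cc) (msub (mmul S (Bb t) (W t)) (mmul S (W t) (Bb t))))) x y) (at t)"
    by (rule der_mmul[OF fin], rule der_U, rule der_W)
  moreover have "madd (mmul S (mscale cc (msub (mmul S (U t) (Bb t)) (mmul S (Bb t) (U t)))) (W t))
      (mmul S (U t) (mscale (cnj cc) (msub (mmul S (Bb t) (W t)) (mmul S (W t) (Bb t)))))
      = mmul S (mscale (-4) (Bb t)) (Rm t)"
    by (simp only: nrm) (simp add: fun_eq_iff madd_def msub_def mscale_def algebra_simps)
  ultimately show ?thesis by simp
qed

lemma der_Sm: "((\<lambda>s. Sm s x y) has_vector_derivative mmul S (mscale 4 (Bb t)) (Sm t) x y) (at t)"
proof -
  have "((\<lambda>s. Sm s x y) has_vector_derivative madd (mmul S (mscale (cnj cc) (msub (mmul S (Bb t) (W t)) (mmul S (W t) (Bb t)))) (U t))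
      (mmul S (W t) (mscale cc (msub (mmul S (U t) (Bb t)) (mmul S (Bb t) (U t))))) x y) (at t)"
    by (rule der_mmul[OF fin], rule der_W, rule der_U)
  moreover have "madd (mmul S (mscale (cnj cc) (msub (mmul S (Bb t) (W t)) (mmul S (W t) (Bb t)))) (U t))
      (mmul S (W t) (mscale cc (msub (mmul S (U t) (Bb t)) (mmul S (Bb t) (U t)))))
      = mmul S (mscale 4 (Bb t)) (Sm t)"
    by (simp only: nrm) (simp add: fun_eq_iff madd_def msub_def mscale_def algebra_simps)
  ultimately show ?thesis by simp
qed

lemma kerR: "mvec S (Rm t1) f = (\<lambda>_. 0) \<Longrightarrow> mvec S (Rm t2) f = (\<lambda>_. 0)"
  by (rule ker_inv_gen[where A=Rm and Qm="\<lambda>s. mscale (-4) (Bb s)", OF fin der_R cont_scale_B])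

lemma kerS: "mvec S (Sm t1) f = (\<lambda>_. 0) \<Longrightarrow> mvec S (Sm t2) f = (\<lambda>_. 0)"
  by (rule ker_inv_gen[where A=Sm and Qm="\<lambda>s. mscale 4 (Bb s)", OF fin der_Sm cont_scale_B])

end


lemma ip_diff: "ip S f (\<lambda>x. g x - h x) = ip S f g - ip S f h"
  by (simp add: ip_def sum_subtractf algebra_simps)

context defo2 begin

lemma kerM_iff: "mvec S (Mm t) f = (\<lambda>_. 0) \<longleftrightarrow> mvec S (Rm t) f = (\<lambda>_. 0) \<and> mvec S (Sm t) f = (\<lambda>_. 0)"
proof
  assume h: "mvec S (Mm t) f = (\<lambda>_. 0)"
  have "mvec S (madd (mmul S (U t) (adj (U t))) (mmul S (W t) (adj (W t)))) f = (\<lambda>_. 0)"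
    using h by (simp add: M_eq)
  from ker_psd2[OF fin this] have "mvec S (W t) f = (\<lambda>_. 0)" "mvec S (U t) f = (\<lambda>_. 0)" by simp_all
  then show "mvec S (Rm t) f = (\<lambda>_. 0) \<and> mvec S (Sm t) f = (\<lambda>_. 0)" by (simp add: mvec_mmul)
next
  assume "mvec S (Rm t) f = (\<lambda>_. 0) \<and> mvec S (Sm t) f = (\<lambda>_. 0)"
  then show "mvec S (Mm t) f = (\<lambda>_. 0)" by (simp add: M_eq mvec_madd)
qed

lemma L_M0: "Lm = Mm 0"
  using L_eq2[of 0] by (simp add: B0)

lemma kerM_L: "mvec S (Mm t) f = (\<lambda>_. 0) \<longleftrightarrow> mvec S Lm f = (\<lambda>_. 0)"
  unfolding L_M0 kerM_iff using kerR kerS by blast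

lemma C_herm: "adj (Cm t) = Cm t" by (simp only: adj_madd adj_adj) (simp add: madd_def fun_eq_iff add.commute)

lemma kerL_B: "mvec S Lm f = (\<lambda>_. 0) \<Longrightarrow> mvec S (Bb t) f = (\<lambda>_. 0)"
proof -
  assume h: "mvec S Lm f = (\<lambda>_. 0)"
  have "mvec S (madd (mmul S (Cm t) (adj (Cm t))) (mmul S (Bb t) (adj (Bb t)))) f = (\<lambda>_. 0)"
    using h by (simp only: C_herm B_herm L_eq2[symmetric])
  from ker_psd2[OF fin this] show ?thesis by (simp add: B_herm)
qed

lemma kerV_B: "mvec S (Vm t) f = (\<lambda>_. 0) \<longleftrightarrow> mvec S (Bb t) f = (\<lambda>_. 0)"
proof
  assume "mvec S (Vm t) f = (\<lambda>_. 0)"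
  then have "mvec S (mmul S (Bb t) (adj (Bb t))) f = (\<lambda>_. 0)" by (simp add: B_herm)
  from ker_psd[OF fin this] show "mvec S (Bb t) f = (\<lambda>_. 0)" by (simp add: B_herm)
next
  assume "mvec S (Bb t) f = (\<lambda>_. 0)" then show "mvec S (Vm t) f = (\<lambda>_. 0)" by (simp add: mvec_mmul)
qed

lemma BR: "mmul S (Bb t) (Rm t) = mmul S (Rm t) (Bb t)"
  by (simp only: nrm) (simp add: fun_eq_iff mscale_def)
lemma BS: "mmul S (Bb t) (Sm t) = mmul S (Sm t) (Bb t)"
  by (simp only: nrm) (simp add: fun_eq_iff mscale_def)
lemma SR: "mmul S (Sm t) (Rm t) = Z" by (simp only: nrm)
lemma RS: "mmul S (Rm t) (Sm t) = Z" by (simp only: nrm)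
lemma R_herm: "adj (Rm t) = Rm t" by (simp add: adj_mmul)
lemma S_herm: "adj (Sm t) = Sm t" by (simp add: adj_mmul)

lemma der_phi:
  "((\<lambda>s. Re (ip S g (mvec S (Bb s) g))) has_real_derivative
     2 * (Re (ip S g (mvec S (Rm s) g)) - Re (ip S g (mvec S (Sm s) g)))) (at s)"
proof -
  have "((\<lambda>s. ip S g (mvec S (Bb s) g)) has_vector_derivative
     ip S g (mvec S (mscale 2 (msub (Rm s) (Sm s))) g)) (at s)"
    by (rule der_ipmv[OF fin der_B])
  then have "((\<lambda>s. Re (ip S g (mvec S (Bb s) g))) has_real_derivative
     Re (ip S g (mvec S (mscale 2 (msub (Rm s) (Sm s))) g))) (at s)"
    by (simp add: has_vector_derivative_complex_iff)
  then show ?thesis by (simp add: mvec_mscale mvec_msub ip_scale ip_diff)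
qed

lemma ipR: "ip S g (mvec S (Rm s) g) = of_real (\<Sum>x\<in>S. (cmod (mvec S (W s) g x))\<^sup>2)"
proof -
  have "ip S g (mvec S (Rm s) g) = ip S (mvec S (adj (U s)) g) (mvec S (adj (U s)) g)" by (rule ip_psd)
  also have "\<dots> = of_real (\<Sum>x\<in>S. (cmod (mvec S (W s) g x))\<^sup>2)" by (rule ip_self)
  finally show ?thesis .
qed

lemma ipS: "ip S g (mvec S (Sm s) g) = of_real (\<Sum>x\<in>S. (cmod (mvec S (U s) g x))\<^sup>2)"
proof -
  have "ip S g (mvec S (Sm s) g) = ip S g (mvec S (mmul S (W s) (adj (W s))) g)" by simp
  also have "\<dots> = ip S (mvec S (adj (W s)) g) (mvec S (adj (W s)) g)" by (rule ip_psd)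
  also have "\<dots> = of_real (\<Sum>x\<in>S. (cmod (mvec S (adj (W s)) g x))\<^sup>2)" by (rule ip_self)
  finally show ?thesis by simp
qed

lemma sq_pos:
  assumes "h \<in> vecs S" "h \<noteq> (\<lambda>_. 0)"
  shows "(\<Sum>x\<in>S. (cmod (h x))\<^sup>2) > 0"
proof -
  have "ip S h h \<noteq> 0" using ip_self_zero[OF fin assms(1)] assms(2) by blast
  then have "(\<Sum>x\<in>S. (cmod (h x))\<^sup>2) \<noteq> 0" unfolding ip_self of_real_eq_0_iff .
  moreover have "(\<Sum>x\<in>S. (cmod (h x))\<^sup>2) \<ge> 0" by (auto intro: sum_nonneg)
  ultimately show ?thesis by linarith
qed

lemma phiR:
  assumes t: "t > 0" and bf: "mvec S (Bb t) f = (\<lambda>_. 0)"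
  shows "mvec S (Rm t) f = (\<lambda>_. 0)"
proof (rule ccontr)
  define g where "g = mvec S (Rm t) f"
  assume "\<not> ?thesis"
  then have gnz: "g \<noteq> (\<lambda>_. 0)" by (simp add: g_def)
  have Bg: "mvec S (Bb t) g = (\<lambda>_. 0)"
    by (simp add: g_def mvec_mmul[symmetric] BR) (simp add: mvec_mmul bf)
  have Sg: "mvec S (Sm s) g = (\<lambda>_. 0)" for s
  proof -
    have "mvec S (Sm t) g = (\<lambda>_. 0)" by (simp add: g_def mvec_mmul[symmetric] SR)
    then show ?thesis by (rule kerS)
  qed
  have Rg: "mvec S (Rm s) g \<noteq> (\<lambda>_. 0)" for s
  proof
    assume "mvec S (Rm s) g = (\<lambda>_. 0)"
    then have "mvec S (Rm t) g = (\<lambda>_. 0)" by (rule kerR)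
    then have "mvec S (mmul S (Rm t) (adj (Rm t))) f = (\<lambda>_. 0)"
      by (simp only: R_herm g_def mvec_mmul)
    from ker_psd[OF fin this] have "g = (\<lambda>_. 0)" by (simp only: R_herm g_def)
    with gnz show False by simp
  qed
  have Wg: "mvec S (W s) g \<noteq> (\<lambda>_. 0)" for s
  proof
    assume "mvec S (W s) g = (\<lambda>_. 0)"
    then have "mvec S (Rm s) g = (\<lambda>_. 0)" by (simp add: mvec_mmul)
    with Rg show False by simp
  qed
  define \<phi> where "\<phi> = (\<lambda>s. Re (ip S g (mvec S (Bb s) g)))"
  have "\<phi> 0 < \<phi> t"
  proof (rule DERIV_pos_imp_increasing[OF t])
    fix x
    show "\<exists>y. (\<phi> has_real_derivative y) (at x) \<and> 0 < y"
      using der_phi[of g x] Sg[of x] ipR[of g x] sq_pos[OF mvec_vecs Wg[of x]]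
      unfolding \<phi>_def by (auto simp: ip_0)
  qed
  moreover have "\<phi> 0 = 0" by (simp add: \<phi>_def B0 ip_0)
  moreover have "\<phi> t = 0" by (simp add: \<phi>_def Bg ip_0)
  ultimately show False by simp
qed

lemma phiS:
  assumes t: "t > 0" and bf: "mvec S (Bb t) f = (\<lambda>_. 0)"
  shows "mvec S (Sm t) f = (\<lambda>_. 0)"
proof (rule ccontr)
  define g where "g = mvec S (Sm t) f"
  assume "\<not> ?thesis"
  then have gnz: "g \<noteq> (\<lambda>_. 0)" by (simp add: g_def)
  have Bg: "mvec S (Bb t) g = (\<lambda>_. 0)"
    by (simp add: g_def mvec_mmul[symmetric] BS) (simp add: mvec_mmul bf)
  have Rg: "mvec S (Rm s) g = (\<lambda>_. 0)" for s
  proof -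
    have "mvec S (Rm t) g = (\<lambda>_. 0)" by (simp add: g_def mvec_mmul[symmetric] RS)
    then show ?thesis by (rule kerR)
  qed
  have Sg: "mvec S (Sm s) g \<noteq> (\<lambda>_. 0)" for s
  proof
    assume "mvec S (Sm s) g = (\<lambda>_. 0)"
    then have "mvec S (Sm t) g = (\<lambda>_. 0)" by (rule kerS)
    then have "mvec S (mmul S (Sm t) (adj (Sm t))) f = (\<lambda>_. 0)"
      by (simp only: S_herm g_def mvec_mmul)
    from ker_psd[OF fin this] have "g = (\<lambda>_. 0)" by (simp only: S_herm g_def)
    with gnz show False by simp
  qed
  have Ug: "mvec S (U s) g \<noteq> (\<lambda>_. 0)" for s
  proof
    assume "mvec S (U s) g = (\<lambda>_. 0)"
    then have "mvec S (Sm s) g = (\<lambda>_. 0)" by (simp add: mvec_mmul)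
    with Sg show False by simp
  qed
  define \<phi> where "\<phi> = (\<lambda>s. - Re (ip S g (mvec S (Bb s) g)))"
  have "\<phi> 0 < \<phi> t"
  proof (rule DERIV_pos_imp_increasing[OF t])
    fix x
    have "(\<phi> has_real_derivative - (2 * (Re (ip S g (mvec S (Rm x) g)) - Re (ip S g (mvec S (Sm x) g))))) (at x)"
      unfolding \<phi>_def by (intro DERIV_minus der_phi)
    then show "\<exists>y. (\<phi> has_real_derivative y) (at x) \<and> 0 < y"
      using Rg[of x] ipS[of g x] sq_pos[OF mvec_vecs Ug[of x]]
      by (auto simp: ip_0)
  qed
  moreover have "\<phi> 0 = 0" by (simp add: \<phi>_def B0 ip_0)
  moreover have "\<phi> t = 0" by (simp add: \<phi>_def Bg ip_0)
  ultimately show False by simp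
qed

end


context defo2 begin

lemma main_locale:
  "\<forall>t. Lm = madd (Mm t) (Vm t) \<and> Lm = madd (madd (Rm t) (Sm t)) (Vm t)
           \<and> (\<forall>X\<in>{Mm t, Lm, Vm t, Rm t, Sm t}. self_adjoint X)
           \<and> (\<forall>X\<in>{Mm t, Lm, Vm t, Rm t, Sm t}. \<forall>Y\<in>{Mm t, Lm, Vm t, Rm t, Sm t}.
                  mmul S X Y = mmul S Y X)
           \<and> (\<forall>c. eigenvalue S (Mm t) c \<longrightarrow> Im c = 0 \<and> Re c \<ge> 0)
           \<and> (\<forall>c. eigenvalue S (Vm t) c \<longrightarrow> Im c = 0 \<and> Re c \<ge> 0)
           \<and> (t > 0 \<longrightarrow> kernel S (Bb t) = kernel S (Mm t) \<and> kernel S (Mm t) = kernel S Lm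
                        \<and> kernel S Lm = kernel S (Vm t))"
proof (intro allI)
  fix t
  have a1: "Lm = madd (Mm t) (Vm t)" by (rule L_eq2)
  have a2: "Lm = madd (madd (Rm t) (Sm t)) (Vm t)" by (rule L_eq)
  have a3: "\<forall>X\<in>{Mm t, Lm, Vm t, Rm t, Sm t}. self_adjoint X" by (rule sa_all)
  have a4: "\<forall>X\<in>{Mm t, Lm, Vm t, Rm t, Sm t}. \<forall>Y\<in>{Mm t, Lm, Vm t, Rm t, Sm t}. mmul S X Y = mmul S Y X"
    by (rule comm_all)
  have a5: "\<forall>c. eigenvalue S (Mm t) c \<longrightarrow> Im c = 0 \<and> Re c \<ge> 0"
    using eig_psd[OF fin C_herm] by blast
  have a6: "\<forall>c. eigenvalue S (Vm t) c \<longrightarrow> Im c = 0 \<and> Re c \<ge> 0"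
    using eig_psd[OF fin B_herm] by blast
  have BM: "mvec S (Bb t) f = (\<lambda>_. 0) \<longleftrightarrow> mvec S (Mm t) f = (\<lambda>_. 0)" if "t > 0" for f
    using phiR[OF that] phiS[OF that] kerM_iff kerM_L kerL_B by blast
  have a7: "t > 0 \<longrightarrow> kernel S (Bb t) = kernel S (Mm t) \<and> kernel S (Mm t) = kernel S Lm
                        \<and> kernel S Lm = kernel S (Vm t)"
  proof
    assume t: "t > 0"
    have "kernel S (Bb t) = kernel S (Mm t)" using BM[OF t] by (auto simp: kernel_def)
    moreover have "kernel S (Mm t) = kernel S Lm" using kerM_L by (auto simp: kernel_def)
    moreover have "kernel S Lm = kernel S (Vm t)" using BM[OF t] kerM_L kerV_B by (auto simp: kernel_def)
    ultimately show "kernel S (Bb t) = kernel S (Mm t) \<and> kernel S (Mm t) = kernel S Lm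
                        \<and> kernel S Lm = kernel S (Vm t)" by blast
  qed
  show "Lm = madd (Mm t) (Vm t) \<and> Lm = madd (madd (Rm t) (Sm t)) (Vm t)
           \<and> (\<forall>X\<in>{Mm t, Lm, Vm t, Rm t, Sm t}. self_adjoint X)
           \<and> (\<forall>X\<in>{Mm t, Lm, Vm t, Rm t, Sm t}. \<forall>Y\<in>{Mm t, Lm, Vm t, Rm t, Sm t}.
                  mmul S X Y = mmul S Y X)
           \<and> (\<forall>c. eigenvalue S (Mm t) c \<longrightarrow> Im c = 0 \<and> Re c \<ge> 0)
           \<and> (\<forall>c. eigenvalue S (Vm t) c \<longrightarrow> Im c = 0 \<and> Re c \<ge> 0)
           \<and> (t > 0 \<longrightarrow> kernel S (Bb t) = kernel S (Mm t) \<and> kernel S (Mm t) = kernel S Lm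
                        \<and> kernel S Lm = kernel S (Vm t))"
    using a1 a2 a3 a4 a5 a6 a7 by blast
qed

end


lemma simplices_finite: "finite V \<Longrightarrow> finite (simplices V E)"
  by (rule finite_subset[of _ "Pow V"]) (auto simp: simplices_def)

lemma ext_d_entry: "ext_d S x y = (if x \<in> S \<and> y \<in> S \<and> y \<subseteq> x \<and> card x = card y + 1
       then (\<Sum>w\<in>x - y. (-1) ^ card {v\<in>x. v < w}) else 0)"
  by (simp add: ext_d_def)

lemma ext_d_sq:
  fixes V :: "'a::linorder set" and E
  assumes finV: "finite V"
  shows "mmul (simplices V E) (ext_d (simplices V E)) (ext_d (simplices V E)) = Z"
proof (intro ext)
  fix x z
  let ?S = "simplices V E"
  let ?d = "ext_d ?S"
  have finS: "finite ?S" by (rule simplices_finite[OF finV])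
  show "mmul ?S ?d ?d x z = Z x z"
  proof (cases "x \<in> ?S \<and> z \<in> ?S \<and> z \<subseteq> x \<and> card x = card z + 2")
    case False
    have h: "?d x y * ?d y z = 0" for y
      using False by (auto simp: ext_d_entry)
    have "(\<Sum>y\<in>?S. ?d x y * ?d y z) = 0" by (rule sum.neutral) (use h in blast)
    then show ?thesis by (simp add: mmul_def Z_def)
  next
    case True
    then have xS: "x \<in> ?S" and zS: "z \<in> ?S" and zx: "z \<subseteq> x" and cx: "card x = card z + 2" by auto
    have finx: "finite x" using xS finV by (auto simp: simplices_def intro: finite_subset)
    have finz: "finite z" using finx zx finite_subset by blast
    have "card (x - z) = 2" using cx zx finz by (simp add: card_Diff_subset)
    then obtain a b where ab: "x - z = {a, b}" "a \<noteq> b" by (auto simp: card_2_iff)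
    obtain w1 w2 where w: "x - z = {w1, w2}" "w1 < w2"
    proof (cases "a < b")
      case True then show ?thesis using that ab by blast
    next
      case False then have "b < a" using ab(2) by auto
      then show ?thesis using that ab by (metis insert_commute)
    qed
    have w1x: "w1 \<in> x" "w1 \<notin> z" and w2x: "w2 \<in> x" "w2 \<notin> z" using w(1) by auto
    define y1 where "y1 = x - {w1}"
    define y2 where "y2 = x - {w2}"
    have sub_simp: "y \<in> ?S" if "y \<subseteq> x" "z \<subseteq> y" for y
    proof -
      have xs: "x \<subseteq> V" "\<forall>u\<in>x. \<forall>v\<in>x. u \<noteq> v \<longrightarrow> E u v" using xS by (simp_all add: simplices_def)
      have zs: "z \<noteq> {}" using zS by (simp add: simplices_def)
      have "y \<subseteq> V" "y \<noteq> {}" "\<forall>u\<in>y. \<forall>v\<in>y. u \<noteq> v \<longrightarrow> E u v"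
        using that xs zs by blast+
      then show ?thesis by (simp add: simplices_def)
    qed
    have y1S: "y1 \<in> ?S" by (rule sub_simp) (use w1x zx in \<open>auto simp: y1_def\<close>)
    have y2S: "y2 \<in> ?S" by (rule sub_simp) (use w2x zx in \<open>auto simp: y2_def\<close>)
    have y12: "y1 \<noteq> y2" using w w1x w2x by (auto simp: y1_def y2_def)
    have zero: "?d x y * ?d y z = 0" if "y \<in> ?S" "y \<notin> {y1, y2}" for y
    proof (rule ccontr)
      assume nz: "?d x y * ?d y z \<noteq> 0"
      then have yx: "y \<subseteq> x" "card x = card y + 1" and zy: "z \<subseteq> y"
        by (auto simp: ext_d_entry split: if_splits)
      have finy: "finite y" using finx yx finite_subset by blast
      have "card (x - y) = 1" using yx finy by (simp add: card_Diff_subset)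
      then obtain w where xw: "x - y = {w}" by (auto simp: card_Suc_eq)
      have "w \<in> x - z" using xw zy by auto
      then have "w = w1 \<or> w = w2" using w by auto
      moreover have "y = x - {w}" using xw yx by auto
      ultimately have "y \<in> {y1, y2}" by (auto simp: y1_def y2_def)
      with that show False by simp
    qed
    have "mmul ?S ?d ?d x z = (\<Sum>y\<in>?S. ?d x y * ?d y z)" using xS zS by (simp add: mmul_def)
    also have "\<dots> = (\<Sum>y\<in>{y1, y2}. ?d x y * ?d y z)"
      by (rule sum.mono_neutral_right[OF finS]) (use y1S y2S zero in auto)
    also have "\<dots> = ?d x y1 * ?d y1 z + ?d x y2 * ?d y2 z" using y12 by simp
    also have "\<dots> = 0"
    proof -
      define p1 where "p1 = card {v\<in>x. v < w1}"
      define p2 where "p2 = card {v\<in>x. v < w2}"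
      have cy1: "card x = card y1 + 1" "card y1 = card z + 1"
        using cx finx w1x by (auto simp: y1_def card_Diff_singleton)
      have cy2: "card x = card y2 + 1" "card y2 = card z + 1"
        using cx finx w2x by (auto simp: y2_def card_Diff_singleton)
      have d1: "?d x y1 = (-1) ^ p1"
      proof -
        have "x - y1 = {w1}" using w1x by (auto simp: y1_def)
        then show ?thesis using xS y1S cy1 by (simp add: ext_d_entry y1_def p1_def)
      qed
      have d2: "?d x y2 = (-1) ^ p2"
      proof -
        have "x - y2 = {w2}" using w2x by (auto simp: y2_def)
        then show ?thesis using xS y2S cy2 by (simp add: ext_d_entry y2_def p2_def)
      qed
      have "{v\<in>x. v < w2} = insert w1 {v \<in> y1. v < w2}" using w w1x by (auto simp: y1_def)
      then have p2s: "p2 = Suc (card {v \<in> y1. v < w2})"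
        using finx by (simp add: p2_def y1_def)
      have "{v \<in> y2. v < w1} = {v\<in>x. v < w1}" using w by (auto simp: y2_def)
      then have p1s: "card {v \<in> y2. v < w1} = p1" by (simp add: p1_def)
      have d1z: "?d y1 z = (-1) ^ card {v \<in> y1. v < w2}"
      proof -
        have "y1 - z = {w2}" using w w1x w2x by (auto simp: y1_def)
        then show ?thesis using zS y1S cy1 zx w1x by (auto simp: ext_d_entry y1_def)
      qed
      have d2z: "?d y2 z = (-1) ^ p1"
      proof -
        have "y2 - z = {w1}" using w w1x w2x by (auto simp: y2_def)
        then show ?thesis using zS y2S cy2 zx w2x p1s by (auto simp: ext_d_entry y2_def)
      qed
      show ?thesis unfolding d1 d2 d1z d2z p2s by simp
    qed
    finally show ?thesis by (simp add: Z_def)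
  qed
qed


theorem mainTheorem7:
  fixes V :: "'a::linorder set" and E :: "'a \<Rightarrow> 'a \<Rightarrow> bool"
    and \<beta> :: real and D :: "real \<Rightarrow> 'a op"
  assumes G: "finite_simple_graph V E"
    and sol: "dirac_deformation (simplices V E) \<beta> D"
  defines "S \<equiv> simplices V E"
  defines "L \<equiv> mmul S (dirac0 S) (dirac0 S)"
  defines "d \<equiv> \<lambda>t. dpart (D t)"
  defines "b \<equiv> \<lambda>t. bpart (D t)"
  defines "C \<equiv> \<lambda>t. madd (d t) (adj (d t))"
  defines "M \<equiv> \<lambda>t. mmul S (C t) (C t)"
  defines "Vb \<equiv> \<lambda>t. mmul S (b t) (b t)"
  defines "R \<equiv> \<lambda>t. mmul S (d t) (adj (d t))"
  defines "Sd \<equiv> \<lambda>t. mmul S (adj (d t)) (d t)"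
  shows "\<forall>t. L = madd (M t) (Vb t) \<and> L = madd (madd (R t) (Sd t)) (Vb t)
           \<and> (\<forall>X\<in>{M t, L, Vb t, R t, Sd t}. self_adjoint X)
           \<and> (\<forall>X\<in>{M t, L, Vb t, R t, Sd t}. \<forall>Y\<in>{M t, L, Vb t, R t, Sd t}.
                  mmul S X Y = mmul S Y X)
           \<and> (\<forall>c. eigenvalue S (M t) c \<longrightarrow> Im c = 0 \<and> Re c \<ge> 0)
           \<and> (\<forall>c. eigenvalue S (Vb t) c \<longrightarrow> Im c = 0 \<and> Re c \<ge> 0)
           \<and> (t > 0 \<longrightarrow> kernel S (b t) = kernel S (M t) \<and> kernel S (M t) = kernel S L
                        \<and> kernel S L = kernel S (Vb t))"
proof -
  have finV: "finite V" using G by (simp add: finite_simple_graph_def)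
  interpret defo2 "simplices V E" \<beta> D
  proof
    show "finite (simplices V E)" by (rule simplices_finite[OF finV])
    show "D 0 = dirac0 (simplices V E)" using sol by (simp add: dirac_deformation_def)
    show "((\<lambda>s. D s x y) has_vector_derivative FF (simplices V E) \<beta> (D t) x y) (at t)" for t x y
      using sol by (simp add: dirac_deformation_def FF_def)
    show "mmul (simplices V E) (ext_d (simplices V E)) (ext_d (simplices V E)) = Z"
      by (rule ext_d_sq[OF finV])
  qed
  show ?thesis
    unfolding S_def L_def d_def b_def C_def M_def Vb_def R_def Sd_def
    by (rule main_locale)
qed

end
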